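(* Let $n\ge 2$, $c=s_{n-1}s_{n-2}\cdots s_1\in S_n$, and let $k_1,\dots,k_r\in[n-1]$ satisfy $|k_i-k_j|>1$ for all $i\ne j$. Then none of the Plücker relations $R^k_{J,L}$ degenerates to a monomial in $\operatorname{in}_{\mathbf w}(\mathcal I_{cs_{k_1}\cdots s_{k_r}})$.
   Context: Notation: $[a,b]=\{a,\dots,b\}$, $[b]=[1,b]$. $S_n$ is the symmetric group with simple reflections $s_i=(i,i+1)$. For $v\in S_n$, $v([k])=\{v(1),\dots,v(k)\}$; for $k$-subsets $I=\{a_1<\dots<a_k\}$, $K=\{b_1<\dots<b_k\}$ of $[n]$, $I\le K$ iff $a_r\le b_r$ for all $r$. $A_n=\mathbb C[p_I:I\subseteq[n],1\le|I|\le n-1]$; for a sequence of distinct elements, $p$ of the sequence is the signed coordinate of the underlying set (sign of the sorting permutation), and $0$ for sequences with repeats. Plücker relations: for sequences $J=(j_1,\dots,j_e)$, $L=(l_1,\dots,l_d)$ of distinct elements of $[n]$ with $1\le e\le d\le n-1$ and $k\in[e]$, $R^k_{J,L}=p_Jp_L-\sum_{1\le r_1<\dots<r_k\le d}p_{J'}p_{L'}$, with $J'$ obtained from $J$ by replacing $j_t$ by $l_{r_t}$ and $L'$ from $L$ by replacing $l_{r_t}$ by $j_t$. $\mathcal I_{\mathrm{Fl}_n}$ is generated by all $R^k_{J,L}$, and $\mathcal I_v=\mathcal I_{\mathrm{Fl}_n}+(p_I:I\not\le v([|I|]))$. Weight $\mathbf w_I=\#\{a\in I:|I|\le a\le n-1\}$;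 $\operatorname{in}_{\mathbf w}(f)$ is the sum of the terms of $f$ of minimal weight (weight of $\prod p_I^{\alpha_I}$ is $\sum\alpha_I\mathbf w_I$); $\operatorname{in}_{\mathbf w}(\mathcal I)$ is generated by the $\operatorname{in}_{\mathbf w}(f)$, $f\in\mathcal I$. A Plücker relation $R^k_{J,L}$ degenerates to a monomial in $\operatorname{in}_{\mathbf w}(\mathcal I_v)$ if the image of $\operatorname{in}_{\mathbf w}(R^k_{J,L})$ in $A_n/(p_I:I\not\le v([|I|]))$ is a nonzero scalar multiple of a single monomial. *)

theory Defs
  imports Main "HOL-Library.Multiset"
begin

definition srefl :: "nat \<Rightarrow> nat \<Rightarrow> nat" where
  "srefl i x = (if x = i then Suc i else if x = Suc i then i else x)"

(* product s_{i_1} s_{i_2} ... s_{i_m} (composition of functions, applied right to left) *)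
definition sprod :: "nat list \<Rightarrow> nat \<Rightarrow> nat" where
  "sprod is = foldr (\<lambda>i f. srefl i \<circ> f) is id"

definition coxc :: "nat \<Rightarrow> nat \<Rightarrow> nat" where
  "coxc n = sprod (rev [1..<n])"

definition subset_le :: "nat set \<Rightarrow> nat set \<Rightarrow> bool" where
  "subset_le I K \<longleftrightarrow> card I = card K \<and>
     (\<forall>r < card I. sorted_list_of_set I ! r \<le> sorted_list_of_set K ! r)"

(* monomials in the variables p_I: multisets of index sets; polynomials: coefficient functions *)
type_synonym monom = "nat set multiset"
type_synonym poly = "monom \<Rightarrow> int"

(* sign of the permutation sorting a sequence of distinct elements *)
definition seq_sign :: "nat list \<Rightarrow> int" where
  "seq_sign xs = (-1) ^ card {(i, j). i < j \<and> j < length xs \<and> xs ! j < xs ! i}"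

(* the polynomial p_xs * p_ys (p of a sequence with repeats is 0) *)
definition pprod :: "nat list \<Rightarrow> nat list \<Rightarrow> poly" where
  "pprod xs ys = (\<lambda>m. if distinct xs \<and> distinct ys \<and> m = {#set xs, set ys#}
                        then seq_sign xs * seq_sign ys else 0)"

(* J' and L' for the (0-based) index set S = {r_1 < ... < r_k} \<subseteq> {0..<d} *)
definition Jprime :: "nat list \<Rightarrow> nat list \<Rightarrow> nat set \<Rightarrow> nat list" where
  "Jprime J L S = (let rs = sorted_list_of_set S in
      fold (\<lambda>t ys. ys[t := L ! (rs ! t)]) [0..<card S] J)"

definition Lprime :: "nat list \<Rightarrow> nat list \<Rightarrow> nat set \<Rightarrow> nat list" where
  "Lprime J L S = (let rs = sorted_list_of_set S in
      fold (\<lambda>t ys. ys[rs ! t := J ! t]) [0..<card S] L)"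

definition plucker :: "nat list \<Rightarrow> nat list \<Rightarrow> nat \<Rightarrow> poly" where
  "plucker J L k = (\<lambda>m. pprod J L m -
      (\<Sum>S \<in> {S. S \<subseteq> {0..<length L} \<and> card S = k}. pprod (Jprime J L S) (Lprime J L S) m))"

definition wt :: "nat \<Rightarrow> nat set \<Rightarrow> nat" where
  "wt n I = card {a \<in> I. card I \<le> a \<and> a \<le> n - 1}"

definition mweight :: "nat \<Rightarrow> monom \<Rightarrow> nat" where
  "mweight n m = sum_mset (image_mset (wt n) m)"

definition init_w :: "nat \<Rightarrow> poly \<Rightarrow> poly" where
  "init_w n f = (\<lambda>m. if f m \<noteq> 0 \<and> (\<forall>m'. f m' \<noteq> 0 \<longrightarrow> mweight n m \<le> mweight n m')
                      then f m else 0)"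

(* image in A_n / (p_I : I not \<le> v([|I|])) : kill monomials containing such a variable *)
definition kill :: "(nat \<Rightarrow> nat) \<Rightarrow> poly \<Rightarrow> poly" where
  "kill v f = (\<lambda>m. if (\<forall>I \<in># m. subset_le I (v ` {1..card I})) then f m else 0)"

definition degenerates :: "nat \<Rightarrow> (nat \<Rightarrow> nat) \<Rightarrow> nat list \<Rightarrow> nat list \<Rightarrow> nat \<Rightarrow> bool" where
  "degenerates n v J L k \<longleftrightarrow> (\<exists>!m. kill v (init_w n (plucker J L k)) m \<noteq> 0)"

end

theory Submission
  imports Defs
begin

lemma srefl_image_fix:
  assumes "i \<in> Y \<longleftrightarrow> Suc i \<in> Y"
  shows "srefl i ` Y = Y"
proof
  show "srefl i ` Y \<subseteq> Y" using assms by (auto simp: srefl_def)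
  show "Y \<subseteq> srefl i ` Y"
  proof
    fix x assume x: "x \<in> Y"
    have "srefl i (srefl i x) = x" by (auto simp: srefl_def)
    moreover have "srefl i x \<in> Y" using x assms by (auto simp: srefl_def)
    ultimately show "x \<in> srefl i ` Y" by (metis image_eqI)
  qed
qed

lemma srefl_image_m:
  assumes "m \<ge> 1"
  shows "srefl m ` {1..m} = {1..<m} \<union> {m+1}"
proof -
  have "{1..m} = insert m {1..<m}" using assms by auto
  then have "srefl m ` {1..m} = insert (m+1) (srefl m ` {1..<m})" by (auto simp: srefl_def)
  also have "srefl m ` {1..<m} = id ` {1..<m}"
    by (rule image_cong) (auto simp: srefl_def)
  finally show ?thesis by auto
qed

lemma sprod_Cons: "sprod (i # js) = srefl i \<circ> sprod js"
  by (simp add: sprod_def)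

lemma sprod_image:
  assumes "distinct ks" "\<forall>a\<in>set ks. a \<ge> 1 \<and> a + 1 \<notin> set ks" "m \<ge> 1"
  shows "sprod ks ` {1..m} = (if m \<in> set ks then {1..<m} \<union> {m+1} else {1..m})"
  using assms
proof (induction ks)
  case Nil
  then show ?case by (simp add: sprod_def)
next
  case (Cons i js)
  have IH: "sprod js ` {1..m} = (if m \<in> set js then {1..<m} \<union> {m+1} else {1..m})"
    using Cons by auto
  have i1: "i \<ge> 1" using Cons by auto
  have eq: "sprod (i # js) ` {1..m} = srefl i ` (sprod js ` {1..m})"
    by (simp add: sprod_Cons image_comp)
  show ?case
  proof (cases "m = i")
    case True
    then have "m \<notin> set js" using Cons by auto
    then show ?thesis using eq IH True srefl_image_m[OF Cons(4)] by simp
  next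
    case False
    show ?thesis
    proof (cases "m \<in> set js")
      case True
      have "i \<noteq> m + 1" using Cons True by auto
      moreover have "i + 1 \<noteq> m" using Cons True by auto
      ultimately have "srefl i ` ({1..<m} \<union> {m+1}) = {1..<m} \<union> {m+1}"
        using False i1 by (intro srefl_image_fix) auto
      then show ?thesis using eq IH True by simp
    next
      case f2: False
      have "srefl i ` {1..m} = {1..m}"
        using False i1 by (intro srefl_image_fix) auto
      then show ?thesis using eq IH f2 False by simp
    qed
  qed
qed

lemma coxc_val:
  assumes "n \<ge> 1"
  shows "coxc n x = (if x = 1 then n else if 2 \<le> x \<and> x \<le> n then x - 1 else x)"
  using assms
proof (induction n rule: dec_induct)
  case base
  then show ?case by (simp add: coxc_def sprod_def)
next
  case (step n)
  have "rev [1..<Suc n] = n # rev [1..<n]" using step(1) by simp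
  then have "coxc (Suc n) = srefl n \<circ> coxc n" by (simp add: coxc_def sprod_Cons)
  then show ?case using step by (auto simp: srefl_def)
qed

definition okf :: "nat set \<Rightarrow> nat \<Rightarrow> nat set \<Rightarrow> bool" where
  "okf T m I \<longleftrightarrow> (m \<notin> T \<and> {1..<m} \<subseteq> I) \<or> (m \<in> T \<and> {1..<m-1} \<subseteq> I \<and> (m-1 \<in> I \<or> m \<in> I))"

lemma sl_nth_le_iff:
  assumes "finite I" "r < card I"
  shows "sorted_list_of_set I ! r \<le> c \<longleftrightarrow> r < card {x\<in>I. x \<le> c}"
proof -
  define s where "s = sorted_list_of_set I"
  have s: "sorted s" "distinct s" "set s = I" "length s = card I"
    using assms by (auto simp: s_def)
  show ?thesis unfolding s_def[symmetric]
  proof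
    assume a: "s ! r \<le> c"
    have sub: "(\<lambda>i. s ! i) ` {0..r} \<subseteq> {x\<in>I. x \<le> c}"
    proof
      fix x assume "x \<in> (\<lambda>i. s ! i) ` {0..r}"
      then obtain i where i: "i \<le> r" "x = s ! i" by auto
      have "s ! i \<le> s ! r" using s(1) i assms s(4) by (simp add: sorted_nth_mono)
      moreover have "s ! i \<in> I" using s i assms by (metis le_less_trans nth_mem)
      ultimately show "x \<in> {x\<in>I. x \<le> c}" using i a by auto
    qed
    have inj: "inj_on (\<lambda>i. s ! i) {0..r}"
    proof (rule inj_onI)
      fix i j assume "i \<in> {0..r}" "j \<in> {0..r}" "s ! i = s ! j"
      then have "i < length s" "j < length s" using s(4) assms by auto
      then show "i = j" using nth_eq_iff_index_eq[OF s(2)] \<open>s ! i = s ! j\<close> by blast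
    qed
    have "card ((\<lambda>i. s ! i) ` {0..r}) = Suc r" using card_image[OF inj] by simp
    moreover have "finite {x\<in>I. x \<le> c}" using assms by simp
    then have "card ((\<lambda>i. s ! i) ` {0..r}) \<le> card {x\<in>I. x \<le> c}" using card_mono sub by blast
    ultimately have "Suc r \<le> card {x\<in>I. x \<le> c}" by simp
    then show "r < card {x\<in>I. x \<le> c}" by simp
  next
    assume a: "r < card {x\<in>I. x \<le> c}"
    show "s ! r \<le> c"
    proof (rule ccontr)
      assume "\<not> s ! r \<le> c"
      then have big: "s ! r > c" by simp
      have "{x\<in>I. x \<le> c} \<subseteq> (\<lambda>i. s ! i) ` {0..<r}"
      proof
        fix x assume x: "x \<in> {x\<in>I. x \<le> c}"
        then have "x \<in> set s" using s(3) by simp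
        then obtain i where i: "i < length s" "x = s ! i" by (auto simp: in_set_conv_nth)
        have "i < r"
        proof (rule ccontr)
          assume "\<not> i < r"
          then have "s ! r \<le> s ! i" using s(1) i by (simp add: sorted_nth_mono)
          then show False using big x i by auto
        qed
        then show "x \<in> (\<lambda>i. s ! i) ` {0..<r}" using i by auto
      qed
      then have "card {x\<in>I. x \<le> c} \<le> card ((\<lambda>i. s ! i) ` {0..<r})" by (simp add: card_mono)
      also have "\<dots> \<le> r" using card_image_le[of "{0..<r}"] by simp
      finally show False using a by simp
    qed
  qed
qed

lemma card_le_c:
  assumes "I \<subseteq> {1..}" 
  shows "card {x\<in>I. x \<le> c} \<le> c" and "card {x\<in>I. x \<le> c} \<ge> c \<longleftrightarrow> {1..c} \<subseteq> I"
proof -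
  have sub: "{x\<in>I. x \<le> c} \<subseteq> {1..c}" using assms by auto
  have fin: "finite {1..c}" by simp
  have cm: "card {x\<in>I. x \<le> c} \<le> card {1..c}" by (rule card_mono[OF fin sub])
  then show "card {x\<in>I. x \<le> c} \<le> c" by simp
  show "card {x\<in>I. x \<le> c} \<ge> c \<longleftrightarrow> {1..c} \<subseteq> I"
  proof
    assume "card {x\<in>I. x \<le> c} \<ge> c"
    then have "card {x\<in>I. x \<le> c} = card {1..c}" using cm by simp
    then have "{x\<in>I. x \<le> c} = {1..c}" using card_subset_eq[OF fin sub] by blast
    then show "{1..c} \<subseteq> I" by blast
  next
    assume "{1..c} \<subseteq> I"
    then have s2: "{1..c} \<subseteq> {x\<in>I. x \<le> c}" by auto
    have "finite {x\<in>I. x \<le> c}" using sub finite_subset fin by blast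
    then have "card {1..c} \<le> card {x\<in>I. x \<le> c}" using card_mono[OF _ s2] by blast
    then show "card {x\<in>I. x \<le> c} \<ge> c" by simp
  qed
qed

lemma sorted_list_of_set_list:
  assumes "sorted xs" "distinct xs"
  shows "sorted_list_of_set (set xs) = xs"
  using assms by (simp add: sorted_list_of_set_sort_remdups distinct_remdups_id sorted_sort_id)

lemma subset_le_iff:
  assumes "finite I" "finite K" "card I = card K"
  shows "subset_le I K \<longleftrightarrow> (\<forall>r < card K. r < card {x\<in>I. x \<le> sorted_list_of_set K ! r})"
  unfolding subset_le_def using assms sl_nth_le_iff[OF assms(1)] by metis

lemma coxc_image1:
  assumes "n \<ge> 2" "1 \<le> m" "m \<le> n - 1"
  shows "coxc n ` {1..m} = {1..<m} \<union> {n}"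
proof -
  have e: "{1..m} = insert 1 (Suc ` {1..m-1})" using assms by (auto simp: image_Suc_atLeastAtMost)
  have "coxc n ` {1..m} = insert (coxc n 1) ((coxc n \<circ> Suc) ` {1..m-1})" by (simp only: e image_insert image_comp)
  also have "(coxc n \<circ> Suc) ` {1..m-1} = id ` {1..m-1}"
    by (rule image_cong) (use assms in \<open>auto simp: coxc_val\<close>)
  also have "coxc n 1 = n" using assms by (simp add: coxc_val)
  finally show ?thesis using assms by auto
qed

lemma coxc_image2:
  assumes "n \<ge> 2" "2 \<le> m" "m \<le> n - 1"
  shows "coxc n ` ({1..<m} \<union> {m+1}) = {1..<m-1} \<union> {m, n}"
proof -
  have "{1..<m} = {1..m-1}" using assms by auto
  then have "coxc n ` {1..<m} = {1..<m-1} \<union> {n}" using coxc_image1[of n "m-1"] assms by simp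
  moreover have "coxc n (m+1) = m" using assms by (simp add: coxc_val)
  ultimately show ?thesis by auto
qed

lemma coxc_image3:
  assumes "n \<ge> 2"
  shows "coxc n ` ({1..<1} \<union> {1+1}) = {1}"
  using assms by (simp add: coxc_val)

definition Tok :: "nat set \<Rightarrow> bool" where
  "Tok T \<longleftrightarrow> (\<forall>a\<in>T. a + 1 \<notin> T)"

lemma ok_iff:
  assumes n: "n \<ge> 2" and ks: "distinct ks" "set ks \<subseteq> {1..n-1}" "\<forall>a\<in>set ks. a + 1 \<notin> set ks"
    and I: "I \<subseteq> {1..n}" "card I = m" "1 \<le> m" "m \<le> n - 1"
  shows "subset_le I ((coxc n \<circ> sprod ks) ` {1..card I}) \<longleftrightarrow> okf (set ks) m I"
proof -
  have finI: "finite I" using I(1) finite_subset by blast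
  have I1: "I \<subseteq> {1..}" using I(1) by auto
  have img: "(coxc n \<circ> sprod ks) ` {1..m} = coxc n ` (sprod ks ` {1..m})" by (simp add: image_comp)
  have sp: "sprod ks ` {1..m} = (if m \<in> set ks then {1..<m} \<union> {m+1} else {1..m})"
  proof -
    have "\<forall>a\<in>set ks. a \<ge> 1 \<and> a + 1 \<notin> set ks" using ks by auto
    from sprod_image[OF ks(1) this I(3)] show ?thesis .
  qed
  have "{x\<in>I. x \<le> n} = I" using I(1) by auto
  then have cn: "card {x\<in>I. x \<le> n} = m" using I(2) by simp
  show ?thesis
  proof (cases "m \<in> set ks")
    case False
    define K where "K = {1..<m} \<union> {n}"
    have K: "(coxc n \<circ> sprod ks) ` {1..card I} = K" using img sp False coxc_image1[OF n I(3,4)] I(2) K_def by simp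
    have sK: "sorted_list_of_set K = [1..<m] @ [n]"
    proof -
      have "set ([1..<m] @ [n]) = K" using K_def by auto
      moreover have "sorted ([1..<m] @ [n])" "distinct ([1..<m] @ [n])" using I n by (auto simp: sorted_append)
      ultimately show ?thesis using sorted_list_of_set_list by metis
    qed
    have "n \<notin> {1..<m}" using I by auto
    then have cK: "card K = m" using K_def I by simp
    have sKr: "\<And>r. r < m \<Longrightarrow> sorted_list_of_set K ! r = (if r < m - 1 then r + 1 else n)"
      using sK by (auto simp: nth_append)
    have "subset_le I K \<longleftrightarrow> (\<forall>r < m. r < card {x\<in>I. x \<le> sorted_list_of_set K ! r})"
      using subset_le_iff[OF finI _ ] cK I(2) K_def by simp
    also have "\<dots> \<longleftrightarrow> {1..<m} \<subseteq> I"
    proof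
      assume a: "\<forall>r < m. r < card {x\<in>I. x \<le> sorted_list_of_set K ! r}"
      show "{1..<m} \<subseteq> I"
      proof
        fix c assume c: "c \<in> {1..<m}"
        then have c1: "c - 1 < m" "c - 1 < m - 1" by auto
        have "sorted_list_of_set K ! (c - 1) = c" using sKr[OF c1(1)] c1(2) c by simp
        then have "c - 1 < card {x\<in>I. x \<le> c}" using a c1(1) by metis
        then have "{1..c} \<subseteq> I" using card_le_c[OF I1, of c] c by auto
        then show "c \<in> I" using c by auto
      qed
    next
      assume a: "{1..<m} \<subseteq> I"
      show "\<forall>r < m. r < card {x\<in>I. x \<le> sorted_list_of_set K ! r}"
      proof (intro allI impI)
        fix r assume r: "r < m"
        show "r < card {x\<in>I. x \<le> sorted_list_of_set K ! r}"
        proof (cases "r < m - 1")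
          case True
          then have "{1..r+1} \<subseteq> {1..<m}" by auto
          then have "{1..r+1} \<subseteq> I" using a by blast
          then have "r + 1 \<le> card {x\<in>I. x \<le> r + 1}" using card_le_c[OF I1, of "r+1"] by blast
          then show ?thesis using sKr[OF r] True by simp
        next
          case False
          then show ?thesis using sKr[OF r] cn r by simp
        qed
      qed
    qed
    finally show ?thesis using K False unfolding okf_def by simp
  next
    case True
    show ?thesis
    proof (cases "m = 1")
      case m1: True
      have K: "(coxc n \<circ> sprod ks) ` {1..card I} = {1}" using img sp True m1 coxc_image3[OF n] I(2) by simp
      have sK: "sorted_list_of_set {1::nat} = [1]" by simp
      have "subset_le I {1} \<longleftrightarrow> (\<forall>r < 1. r < card {x\<in>I. x \<le> sorted_list_of_set {1::nat} ! r})"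
        using subset_le_iff[OF finI _ ] I(2) m1 by simp
      also have "\<dots> \<longleftrightarrow> 0 < card {x\<in>I. x \<le> 1}" by simp
      also have "\<dots> \<longleftrightarrow> 1 \<in> I"
      proof -
        have "{x\<in>I. x \<le> 1} = (if 1 \<in> I then {1} else {})" using I1 by auto
        then show ?thesis by simp
      qed
      finally show ?thesis using K True m1 I1 unfolding okf_def by auto
    next
      case m2: False
      then have m2: "m \<ge> 2" using I by simp
      define K where "K = {1..<m-1} \<union> {m, n}"
      have K: "(coxc n \<circ> sprod ks) ` {1..card I} = K" using img sp True coxc_image2[OF n m2 I(4)] I(2) K_def by simp
      have sK: "sorted_list_of_set K = [1..<m-1] @ [m, n]"
      proof -
        have "set ([1..<m-1] @ [m, n]) = K" using K_def by auto
        moreover have "sorted ([1..<m-1] @ [m, n])" "distinct ([1..<m-1] @ [m, n])" using I n by (auto simp: sorted_append)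
        ultimately show ?thesis using sorted_list_of_set_list by metis
      qed
      have "n \<notin> {1..<m-1}" "m \<notin> {1..<m-1}" "m \<noteq> n" using I by auto
      then have cK: "card K = m" using K_def I m2 by simp
      have sKr: "\<And>r. r < m \<Longrightarrow> sorted_list_of_set K ! r = (if r < m - 2 then r + 1 else if r = m - 2 then m else n)"
        using sK m2 by (auto simp: nth_append nth_Cons')
      have "subset_le I K \<longleftrightarrow> (\<forall>r < m. r < card {x\<in>I. x \<le> sorted_list_of_set K ! r})"
        using subset_le_iff[OF finI _ ] cK I(2) K_def by simp
      also have "\<dots> \<longleftrightarrow> {1..<m-1} \<subseteq> I \<and> (m-1 \<in> I \<or> m \<in> I)"
      proof
        assume a: "\<forall>r < m. r < card {x\<in>I. x \<le> sorted_list_of_set K ! r}"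
        have A: "{1..<m-1} \<subseteq> I"
        proof
          fix c assume c: "c \<in> {1..<m-1}"
          then have c1: "c - 1 < m" "c - 1 < m - 2" by auto
          have "sorted_list_of_set K ! (c - 1) = c" using sKr[OF c1(1)] c1(2) c by simp
          then have "c - 1 < card {x\<in>I. x \<le> c}" using a c1(1) by metis
          then have "{1..c} \<subseteq> I" using card_le_c[OF I1, of c] c by auto
          then show "c \<in> I" using c by auto
        qed
        have B: "m-1 \<in> I \<or> m \<in> I"
        proof (rule ccontr)
          assume nb: "\<not> (m-1 \<in> I \<or> m \<in> I)"
          have "sorted_list_of_set K ! (m-2) = m" using sKr[of "m-2"] m2 by simp
          moreover have "m - 2 < m" using m2 by simp
          ultimately have lt: "m - 2 < card {x\<in>I. x \<le> m}" using a by metis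
          have "{x\<in>I. x \<le> m} \<subseteq> {1..m-2}"
          proof
            fix x assume x: "x \<in> {x\<in>I. x \<le> m}"
            then have "x \<ge> 1" using I1 by auto
            moreover have "x \<noteq> m" "x \<noteq> m - 1" using nb x by auto
            ultimately show "x \<in> {1..m-2}" using x by auto
          qed
          then have "card {x\<in>I. x \<le> m} \<le> card {1..m-2}" by (intro card_mono) auto
          then have "card {x\<in>I. x \<le> m} \<le> m - 2" by simp
          then show False using lt by simp
        qed
        show "{1..<m-1} \<subseteq> I \<and> (m-1 \<in> I \<or> m \<in> I)" using A B by blast
      next
        assume a: "{1..<m-1} \<subseteq> I \<and> (m-1 \<in> I \<or> m \<in> I)"
        show "\<forall>r < m. r < card {x\<in>I. x \<le> sorted_list_of_set K ! r}"
        proof (intro allI impI)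
          fix r assume r: "r < m"
          show "r < card {x\<in>I. x \<le> sorted_list_of_set K ! r}"
          proof (cases "r < m - 2")
            case True
            then have "{1..r+1} \<subseteq> {1..<m-1}" by auto
            then have "{1..r+1} \<subseteq> I" using a by blast
            then have "r + 1 \<le> card {x\<in>I. x \<le> r + 1}" using card_le_c[OF I1, of "r+1"] by blast
            then show ?thesis using sKr[OF r] True by simp
          next
            case False
            show ?thesis
            proof (cases "r = m - 2")
              case True
              obtain u where u: "u \<in> I" "u \<in> {m-1, m}" using a by blast
              have sub: "insert u {1..<m-1} \<subseteq> {x\<in>I. x \<le> m}" using a u by auto
              have "u \<notin> {1..<m-1}" using u by auto
              then have "card (insert u {1..<m-1}) = m - 1" using m2 by simp
              moreover have "finite {x\<in>I. x \<le> m}" using finI by simp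
              moreover have "card (insert u {1..<m-1}) \<le> card {x\<in>I. x \<le> m}" by (rule card_mono[OF _ sub]) (use finI in simp)
              ultimately have "m - 1 \<le> card {x\<in>I. x \<le> m}" by simp
              then show ?thesis using sKr[OF r] True m2 by simp
            next
              case f2: False
              then show ?thesis using sKr[OF r] cn r False by simp
            qed
          qed
        qed
      qed
      finally show ?thesis using K True unfolding okf_def by simp
    qed
  qed
qed

lemma fold_upd_length: "length (fold (\<lambda>t ys. ys[p t := g t]) [0..<k] xs) = length xs"
  by (induction k) auto

lemma fold_upd_nth_out:
  assumes "i \<notin> p ` {0..<k}"
  shows "fold (\<lambda>t ys. ys[p t := g t]) [0..<k] xs ! i = xs ! i"
  using assms
proof (induction k)
  case 0 then show ?case by simp
next
  case (Suc k)
  have "i \<noteq> p k" "i \<notin> p ` {0..<k}" using Suc(2) by auto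
  then show ?case using Suc.IH by (simp add: nth_list_update)
qed

lemma fold_upd_nth_in:
  assumes "inj_on p {0..<k}" "\<forall>t<k. p t < length xs" "t < k"
  shows "fold (\<lambda>t ys. ys[p t := g t]) [0..<k] xs ! (p t) = g t"
  using assms
proof (induction k)
  case 0 then show ?case by simp
next
  case (Suc k)
  have inj: "inj_on p {0..<k}" using Suc(2) by (auto simp: inj_on_def)
  show ?case
  proof (cases "t = k")
    case True
    then show ?thesis using Suc(3) by (simp add: fold_upd_length)
  next
    case False
    then have tk: "t < k" using Suc(4) by simp
    have "p k \<noteq> p t"
    proof
      assume "p k = p t"
      then have "k = t" using Suc(2) tk by (auto simp: inj_on_def)
      then show False using False by simp
    qed
    then show ?thesis using Suc.IH[OF inj _ tk] Suc(3) by (simp add: nth_list_update)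
  qed
qed

lemma set_nth_image: "set xs = (nth xs) ` {0..<length xs}"
  by (metis list.set_map map_nth set_upt)

definition rsl :: "nat set \<Rightarrow> nat \<Rightarrow> nat" where
  "rsl S t = sorted_list_of_set S ! t"

lemma rsl_props:
  assumes "finite S"
  shows "inj_on (rsl S) {0..<card S}" "rsl S ` {0..<card S} = S"
    "\<And>a b. a < b \<Longrightarrow> b < card S \<Longrightarrow> rsl S a < rsl S b"
proof -
  define s where "s = sorted_list_of_set S"
  have s: "sorted s" "distinct s" "set s = S" "length s = card S" using assms by (auto simp: s_def)
  show "inj_on (rsl S) {0..<card S}" unfolding rsl_def s_def[symmetric]
    using s by (auto simp: inj_on_def nth_eq_iff_index_eq)
  show "rsl S ` {0..<card S} = S" unfolding rsl_def s_def[symmetric]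
  proof -
    have "(\<lambda>t. s ! t) ` {0..<length s} = set s" by (metis set_nth_image)
    then show "(\<lambda>t. s ! t) ` {0..<card S} = S" using s by simp
  qed
  show "\<And>a b. a < b \<Longrightarrow> b < card S \<Longrightarrow> rsl S a < rsl S b" unfolding rsl_def s_def[symmetric]
  proof -
    fix a b assume ab: "a < b" "b < card S"
    have "s ! a \<le> s ! b" using s ab by (simp add: sorted_nth_mono)
    moreover have "s ! a \<noteq> s ! b" using s ab nth_eq_iff_index_eq[OF s(2), of a b] by simp
    ultimately show "s ! a < s ! b" by simp
  qed
qed

lemma Jprime_eq: "Jprime J L S = fold (\<lambda>t ys. ys[t := L ! rsl S t]) [0..<card S] J"
  by (simp add: Jprime_def rsl_def Let_def)

lemma Lprime_eq: "Lprime J L S = fold (\<lambda>t ys. ys[rsl S t := J ! t]) [0..<card S] L"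
  by (simp add: Lprime_def rsl_def Let_def)

context
  fixes J L :: "nat list" and S :: "nat set" and k :: nat
  assumes S: "S \<subseteq> {0..<length L}" "card S = k" and kJ: "k \<le> length J"
begin

lemma finS: "finite S" using S finite_subset by blast

lemma Jp_length: "length (Jprime J L S) = length J"
  unfolding Jprime_eq using fold_upd_length[where p=id] by simp

lemma Jp_nth: "i < length J \<Longrightarrow> Jprime J L S ! i = (if i < k then L ! rsl S i else J ! i)"
proof -
  assume i: "i < length J"
  show ?thesis
  proof (cases "i < k")
    case True
    then show ?thesis unfolding Jprime_eq using fold_upd_nth_in[where p=id and xs=J and t=i and k=k] S kJ by simp
  next
    case False
    then show ?thesis unfolding Jprime_eq using fold_upd_nth_out[where p=id and xs=J and i=i and k=k] S by simp
  qed
qed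

lemma Lp_length: "length (Lprime J L S) = length L"
  unfolding Lprime_eq by (rule fold_upd_length)

lemma Lp_nth_in: "t < k \<Longrightarrow> Lprime J L S ! (rsl S t) = J ! t"
proof -
  assume t: "t < k"
  have lt: "\<forall>t<k. rsl S t < length L"
  proof (intro allI impI)
    fix t assume "t < k"
    then have "rsl S t \<in> rsl S ` {0..<card S}" using S(2) by simp
    then have "rsl S t \<in> S" using rsl_props(2)[OF finS] by simp
    then show "rsl S t < length L" using S(1) by auto
  qed
  have inj: "inj_on (rsl S) {0..<k}" using rsl_props(1)[OF finS] S(2) by simp
  have "fold (\<lambda>t ys. ys[rsl S t := J ! t]) [0..<k] L ! rsl S t = J ! t" by (rule fold_upd_nth_in[OF inj lt t])
  then show ?thesis unfolding Lprime_eq S(2) .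
qed

lemma Lp_nth_out: "i \<notin> S \<Longrightarrow> Lprime J L S ! i = L ! i"
proof -
  assume i: "i \<notin> S"
  then have "i \<notin> rsl S ` {0..<card S}" using rsl_props(2)[OF finS] by simp
  then show ?thesis unfolding Lprime_eq by (rule fold_upd_nth_out)
qed

lemma Jp_set: "set (Jprime J L S) = (nth L) ` S \<union> (nth J) ` {k..<length J}"
proof -
  have "set (Jprime J L S) = (nth (Jprime J L S)) ` {0..<length J}"
    using Jp_length set_nth_image by metis
  also have "{0..<length J} = {0..<k} \<union> {k..<length J}" using kJ by auto
  also have "(nth (Jprime J L S)) ` ({0..<k} \<union> {k..<length J}) = (\<lambda>t. L ! rsl S t) ` {0..<k} \<union> (nth J) ` {k..<length J}"
  proof -
    have "(nth (Jprime J L S)) ` ({0..<k} \<union> {k..<length J}) = (nth (Jprime J L S)) ` {0..<k} \<union> (nth (Jprime J L S)) ` {k..<length J}"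
      by (rule image_Un)
    moreover have "(nth (Jprime J L S)) ` {0..<k} = (\<lambda>t. L ! rsl S t) ` {0..<k}"
      by (rule image_cong) (use kJ in \<open>auto simp: Jp_nth\<close>)
    moreover have "(nth (Jprime J L S)) ` {k..<length J} = (nth J) ` {k..<length J}"
      by (rule image_cong) (use kJ in \<open>auto simp: Jp_nth\<close>)
    ultimately show ?thesis by simp
  qed
  also have "(\<lambda>t. L ! rsl S t) ` {0..<k} = (nth L) ` (rsl S ` {0..<k})" unfolding image_image by simp
  also have "rsl S ` {0..<k} = S" using rsl_props(2)[OF finS] S(2) by simp
  finally show ?thesis .
qed

lemma Lp_set: "set (Lprime J L S) = (nth J) ` {0..<k} \<union> (nth L) ` ({0..<length L} - S)"
proof -
  have "set (Lprime J L S) = (nth (Lprime J L S)) ` {0..<length L}"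
    using Lp_length set_nth_image by metis
  also have "{0..<length L} = S \<union> ({0..<length L} - S)" using S by auto
  also have "(nth (Lprime J L S)) ` (S \<union> ({0..<length L} - S)) = (nth (Lprime J L S)) ` S \<union> (nth (Lprime J L S)) ` ({0..<length L} - S)"
    by (rule image_Un)
  also have "(nth (Lprime J L S)) ` ({0..<length L} - S) = (nth L) ` ({0..<length L} - S)"
    by (rule image_cong) (auto simp: Lp_nth_out)
  also have "(nth (Lprime J L S)) ` S = (nth (Lprime J L S)) ` (rsl S ` {0..<k})" using rsl_props(2)[OF finS] S(2) by simp
  also have "\<dots> = (\<lambda>t. Lprime J L S ! (rsl S t)) ` {0..<k}" unfolding image_image by simp
  also have "\<dots> = (nth J) ` {0..<k}" by (rule image_cong) (auto simp: Lp_nth_in)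
  finally show ?thesis .
qed

end

definition pairs :: "nat set \<Rightarrow> (nat \<times> nat) set" where
  "pairs I = {(i,j). i \<in> I \<and> j \<in> I \<and> i < j}"

definition sg :: "(nat \<Rightarrow> nat) \<Rightarrow> nat set \<Rightarrow> int" where
  "sg f I = (\<Prod>p\<in>pairs I. if f (snd p) < f (fst p) then -1 else 1)"

definition cr :: "nat set \<Rightarrow> nat set \<Rightarrow> int" where
  "cr X Y = (\<Prod>x\<in>X. \<Prod>y\<in>Y. if y < x then -1 else 1)"

definition pos :: "nat set \<Rightarrow> nat set \<Rightarrow> int" where
  "pos X Y = (\<Prod>x\<in>X. \<Prod>y\<in>Y. if y < x then -1 else 1)"

lemma finite_pairs: "finite I \<Longrightarrow> finite (pairs I)"
  unfolding pairs_def by (rule finite_subset[of _ "I \<times> I"]) auto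

lemma prod_if_neg: "finite A \<Longrightarrow> (\<Prod>p\<in>A. if P p then -1 else 1 :: int) = (-1) ^ card {p\<in>A. P p}"
proof (induction A rule: finite_induct)
  case empty then show ?case by simp
next
  case (insert x A)
  have "{p \<in> insert x A. P p} = (if P x then insert x {p\<in>A. P p} else {p\<in>A. P p})" by auto
  moreover have "x \<notin> {p\<in>A. P p}" using insert by auto
  moreover have "finite {p\<in>A. P p}" using insert by auto
  ultimately show ?case using insert by auto
qed

lemma seq_sign_sg: "seq_sign xs = sg (nth xs) {0..<length xs}"
proof -
  have "{(i, j). i < j \<and> j < length xs \<and> xs ! j < xs ! i} = {p \<in> pairs {0..<length xs}. xs ! snd p < xs ! fst p}"
    unfolding pairs_def by auto
  then show ?thesis unfolding seq_sign_def sg_def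
    using prod_if_neg[OF finite_pairs[of "{0..<length xs}"], of "\<lambda>p. xs ! snd p < xs ! fst p"] by simp
qed

lemma sg_cong: "(\<And>i. i \<in> I \<Longrightarrow> f i = g i) \<Longrightarrow> sg f I = sg g I"
  unfolding sg_def pairs_def by (rule prod.cong) auto

lemma sg_reindex:
  assumes mono: "\<And>a b. a < b \<Longrightarrow> b < k \<Longrightarrow> r a < r b" and S: "S = r ` {0..<k}"
  shows "sg f S = sg (f \<circ> r) {0..<k}"
proof -
  have inj: "inj_on r {0..<k}"
  proof (rule inj_onI)
    fix a b assume "a \<in> {0..<k}" "b \<in> {0..<k}" "r a = r b"
    then show "a = b" using mono[of a b] mono[of b a] by (cases a b rule: linorder_cases) auto
  qed
  have P: "pairs S = (\<lambda>(a,b). (r a, r b)) ` pairs {0..<k}"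
  proof
    show "pairs S \<subseteq> (\<lambda>(a,b). (r a, r b)) ` pairs {0..<k}"
    proof
      fix p assume "p \<in> pairs S"
      then obtain i j where p: "p = (i,j)" "i \<in> S" "j \<in> S" "i < j" unfolding pairs_def by auto
      then obtain a b where ab: "a < k" "b < k" "i = r a" "j = r b" using S by auto
      have "a < b"
      proof (rule ccontr)
        assume "\<not> a < b"
        then have "b < a \<or> a = b" by auto
        then show False using mono[of b a] ab p by auto
      qed
      then show "p \<in> (\<lambda>(a,b). (r a, r b)) ` pairs {0..<k}" using ab p unfolding pairs_def by auto
    qed
    show "(\<lambda>(a,b). (r a, r b)) ` pairs {0..<k} \<subseteq> pairs S"
      using mono S unfolding pairs_def by auto
  qed
  have injp: "inj_on (\<lambda>(a,b). (r a, r b)) (pairs {0..<k})"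
    using inj unfolding pairs_def inj_on_def by auto
  show ?thesis unfolding sg_def P prod.reindex[OF injp] by (rule prod.cong) auto
qed

lemma prod_sq_one: "finite A \<Longrightarrow> (\<forall>a\<in>A. g a * g a = (1::int)) \<Longrightarrow> prod g A * prod g A = 1"
  by (induction A rule: finite_induct) (auto simp: algebra_simps)

lemma cr_nonzero: "finite X \<Longrightarrow> finite Y \<Longrightarrow> cr X Y * cr X Y = 1"
proof -
  assume fX: "finite X" and fY: "finite Y"
  have "\<forall>x\<in>X. (\<Prod>y\<in>Y. if y < x then -1 else (1::int)) * (\<Prod>y\<in>Y. if y < x then -1 else 1) = 1"
    using prod_sq_one[OF fY] by simp
  then show ?thesis unfolding cr_def by (rule prod_sq_one[OF fX])
qed

lemma sg_split:
  assumes fin: "finite S" "finite S'" and disj: "S \<inter> S' = {}" and inj: "inj_on f (S \<union> S')"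
  shows "sg f (S \<union> S') = sg f S * sg f S' * cr (f ` S) (f ` S') * pos S S'"
proof -
  define h where "h = (\<lambda>p. if f (snd p) < f (fst p) then -1 else (1::int))"
  define M1 where "M1 = {(i,j). i \<in> S \<and> j \<in> S' \<and> i < j}"
  define M2 where "M2 = {(i,j). i \<in> S' \<and> j \<in> S \<and> i < j}"
  have PU: "pairs (S \<union> S') = (pairs S \<union> pairs S') \<union> (M1 \<union> M2)"
    unfolding pairs_def M1_def M2_def by auto
  have finP: "finite (pairs S)" "finite (pairs S')" using finite_pairs fin by auto
  have finM: "finite M1" "finite M2" unfolding M1_def M2_def
    by (rule finite_subset[of _ "S \<times> S'"], auto simp: fin, rule finite_subset[of _ "S' \<times> S"], auto simp: fin)
  have d1: "pairs S \<inter> pairs S' = {}" using disj unfolding pairs_def by auto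
  have d2: "(pairs S \<union> pairs S') \<inter> (M1 \<union> M2) = {}" using disj unfolding pairs_def M1_def M2_def by auto
  have d3: "M1 \<inter> M2 = {}" using disj unfolding M1_def M2_def by auto
  have "sg f (S \<union> S') = prod h (pairs S \<union> pairs S') * prod h (M1 \<union> M2)"
    unfolding sg_def h_def[symmetric] PU by (rule prod.union_disjoint) (use finP finM d2 in auto)
  also have "prod h (pairs S \<union> pairs S') = sg f S * sg f S'"
    unfolding sg_def h_def[symmetric] by (rule prod.union_disjoint) (use finP d1 in auto)
  also have "prod h (M1 \<union> M2) = prod h M1 * prod h M2"
    by (rule prod.union_disjoint) (use finM d3 in auto)
  also have "prod h M2 = prod (\<lambda>(i,j). h (j,i)) {(i,j). i \<in> S \<and> j \<in> S' \<and> j < i}"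
  proof -
    have "M2 = (\<lambda>(i,j). (j,i)) ` {(i,j). i \<in> S \<and> j \<in> S' \<and> j < i}" unfolding M2_def by auto
    moreover have "inj_on (\<lambda>(i,j). (j,i)) {(i,j). i \<in> S \<and> j \<in> S' \<and> j < i}" by (auto simp: inj_on_def)
    ultimately show ?thesis by (simp add: prod.reindex case_prod_unfold)
  qed
  also have "prod h M1 * prod (\<lambda>(i,j). h (j,i)) {(i,j). i \<in> S \<and> j \<in> S' \<and> j < i}
      = (\<Prod>p\<in>S \<times> S'. (if f (snd p) < f (fst p) then -1 else 1) * (if snd p < fst p then -1 else 1))"
  proof -
    define G where "G = (\<lambda>p::nat\<times>nat. (if f (snd p) < f (fst p) then -1 else (1::int)) * (if snd p < fst p then -1 else 1))"
    have SS: "S \<times> S' = M1 \<union> {(i,j). i \<in> S \<and> j \<in> S' \<and> j < i}" unfolding M1_def using disj by auto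
    have fin3: "finite {(i,j). i \<in> S \<and> j \<in> S' \<and> j < i}"
      by (rule finite_subset[of _ "S \<times> S'"]) (auto simp: fin)
    have "prod G (S \<times> S') = prod G M1 * prod G {(i,j). i \<in> S \<and> j \<in> S' \<and> j < i}"
      unfolding SS by (rule prod.union_disjoint) (use finM fin3 in \<open>auto simp: M1_def\<close>)
    moreover have "prod G M1 = prod h M1"
      by (rule prod.cong) (auto simp: G_def h_def M1_def)
    moreover have "prod G {(i,j). i \<in> S \<and> j \<in> S' \<and> j < i} = prod (\<lambda>(i,j). h (j,i)) {(i,j). i \<in> S \<and> j \<in> S' \<and> j < i}"
    proof (rule prod.cong)
      fix p assume p: "p \<in> {(i,j). i \<in> S \<and> j \<in> S' \<and> j < i}"
      then obtain i j where ij: "p = (i,j)" "i \<in> S" "j \<in> S'" "j < i" by auto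
      have "f i \<noteq> f j" using inj ij disj unfolding inj_on_def by auto
      then show "G p = (\<lambda>(i,j). h (j,i)) p" using ij by (auto simp: G_def h_def)
    qed simp
    ultimately show ?thesis unfolding G_def by simp
  qed
  also have "\<dots> = (\<Prod>p\<in>S \<times> S'. (if f (snd p) < f (fst p) then -1 else 1)) * (\<Prod>p\<in>S \<times> S'. (if snd p < fst p then -1 else 1))"
    by (rule prod.distrib)
  also have "(\<Prod>p\<in>S \<times> S'. (if snd p < fst p then -1 else 1)) = pos S S'"
    unfolding pos_def prod.cartesian_product by (rule prod.cong) auto
  also have "(\<Prod>p\<in>S \<times> S'. (if f (snd p) < f (fst p) then -1 else 1)) = cr (f ` S) (f ` S')"
  proof -
    have injS: "inj_on f S" "inj_on f S'" using inj by (auto simp: inj_on_def)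
    have "cr (f ` S) (f ` S') = (\<Prod>x\<in>S. \<Prod>y\<in>S'. if f y < f x then -1 else 1)"
      unfolding cr_def prod.reindex[OF injS(1)] prod.reindex[OF injS(2)] by simp
    also have "\<dots> = (\<Prod>p\<in>S \<times> S'. (if f (snd p) < f (fst p) then -1 else 1))"
      unfolding prod.cartesian_product by (rule prod.cong) auto
    finally show ?thesis by simp
  qed
  finally show ?thesis by (simp add: algebra_simps)
qed

lemma inj_nth_distinct: "distinct xs \<Longrightarrow> inj_on (nth xs) {0..<length xs}"
  by (auto simp: inj_on_def nth_eq_iff_index_eq)

lemma sign_identity:
  fixes J L :: "nat list" and S :: "nat set" and k :: nat
  assumes S: "S \<subseteq> {0..<length L}" "card S = k" and kJ: "k \<le> length J"
    and dJ: "distinct J" and dL: "distinct L"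
    and dJ': "distinct (Jprime J L S)" and dL': "distinct (Lprime J L S)"
  defines "P \<equiv> nth J ` {0..<k}" and "Q \<equiv> nth J ` {k..<length J}"
    and "X \<equiv> nth L ` S" and "R \<equiv> nth L ` ({0..<length L} - S)"
  shows "seq_sign (Jprime J L S) * seq_sign (Lprime J L S) * cr P Q * cr X R
       = seq_sign J * seq_sign L * cr X Q * cr P R"
proof -
  define J' where "J' = Jprime J L S"
  define L' where "L' = Lprime J L S"
  have finS: "finite S" using finS[OF S kJ] .
  have lJ': "length J' = length J" unfolding J'_def using Jp_length[OF S kJ] .
  have lL': "length L' = length L" unfolding L'_def using Lp_length[OF S kJ] .
  have J'n: "\<And>i. i < length J \<Longrightarrow> J' ! i = (if i < k then L ! rsl S i else J ! i)"
    unfolding J'_def using Jp_nth[OF S kJ] .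
  have L'in: "\<And>t. t < k \<Longrightarrow> L' ! (rsl S t) = J ! t" unfolding L'_def using Lp_nth_in[OF S kJ] .
  have L'out: "\<And>i. i \<notin> S \<Longrightarrow> L' ! i = L ! i" unfolding L'_def using Lp_nth_out[OF S kJ] .
  have rs_mono: "\<And>a b. a < b \<Longrightarrow> b < k \<Longrightarrow> rsl S a < rsl S b" using rsl_props(3)[OF finS] S(2) by simp
  have rs_img: "S = rsl S ` {0..<k}" using rsl_props(2)[OF finS] S(2) by simp
  have UJ: "{0..<length J} = {0..<k} \<union> {k..<length J}" using kJ by auto
  have DJ: "{0..<k} \<inter> {k..<length J} = {}" by auto
  have injJ: "inj_on (nth J) ({0..<k} \<union> {k..<length J})" using inj_nth_distinct[OF dJ] UJ by simp
  have injJ': "inj_on (nth J') ({0..<k} \<union> {k..<length J})" using inj_nth_distinct[of J'] dJ' lJ' UJ J'_def by simp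
  have sJ: "seq_sign J = sg (nth J) {0..<k} * sg (nth J) {k..<length J} * cr P Q * pos {0..<k} {k..<length J}"
    unfolding seq_sign_sg UJ P_def Q_def by (rule sg_split) (use DJ injJ in auto)
  have sJ'0: "seq_sign J' = sg (nth J') {0..<k} * sg (nth J') {k..<length J} * cr (nth J' ` {0..<k}) (nth J' ` {k..<length J}) * pos {0..<k} {k..<length J}"
    unfolding seq_sign_sg lJ' UJ by (rule sg_split) (use DJ injJ' in auto)
  have a1: "sg (nth J') {0..<k} = sg (nth L \<circ> rsl S) {0..<k}" by (rule sg_cong) (use J'n kJ in auto)
  have a2: "sg (nth J') {k..<length J} = sg (nth J) {k..<length J}" by (rule sg_cong) (use J'n in auto)
  have a3: "nth J' ` {0..<k} = X"
  proof -
    have "nth J' ` {0..<k} = (\<lambda>t. L ! rsl S t) ` {0..<k}" by (rule image_cong) (use J'n kJ in auto)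
    also have "\<dots> = nth L ` (rsl S ` {0..<k})" unfolding image_image by simp
    finally show ?thesis using rs_img X_def by simp
  qed
  have a4: "nth J' ` {k..<length J} = Q" unfolding Q_def by (rule image_cong) (use J'n in auto)
  have sJ': "seq_sign J' = sg (nth L \<circ> rsl S) {0..<k} * sg (nth J) {k..<length J} * cr X Q * pos {0..<k} {k..<length J}"
    using sJ'0 a1 a2 a3 a4 by simp
  define Sc where "Sc = {0..<length L} - S"
  have UL: "{0..<length L} = S \<union> Sc" using S unfolding Sc_def by auto
  have DL: "S \<inter> Sc = {}" unfolding Sc_def by auto
  have finSc: "finite Sc" unfolding Sc_def by simp
  have injL: "inj_on (nth L) (S \<union> Sc)" using inj_nth_distinct[OF dL] UL by simp
  have injL': "inj_on (nth L') (S \<union> Sc)" using inj_nth_distinct[of L'] dL' lL' UL L'_def by simp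
  have sL0: "seq_sign L = sg (nth L) S * sg (nth L) Sc * cr (nth L ` S) (nth L ` Sc) * pos S Sc"
    unfolding seq_sign_sg UL by (rule sg_split) (use DL injL finS finSc in auto)
  have sL: "seq_sign L = sg (nth L) S * sg (nth L) Sc * cr X R * pos S Sc"
    using sL0 unfolding X_def R_def Sc_def by simp
  have sL'0: "seq_sign L' = sg (nth L') S * sg (nth L') Sc * cr (nth L' ` S) (nth L' ` Sc) * pos S Sc"
    unfolding seq_sign_sg lL' UL by (rule sg_split) (use DL injL' finS finSc in auto)
  have b0: "sg (nth L) S = sg (nth L \<circ> rsl S) {0..<k}" by (rule sg_reindex[OF rs_mono rs_img])
  have b1: "sg (nth L') S = sg (nth J) {0..<k}"
  proof -
    have "sg (nth L') S = sg (nth L' \<circ> rsl S) {0..<k}" by (rule sg_reindex[OF rs_mono rs_img])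
    also have "\<dots> = sg (nth J) {0..<k}" by (rule sg_cong) (use L'in in auto)
    finally show ?thesis .
  qed
  have b2: "sg (nth L') Sc = sg (nth L) Sc" by (rule sg_cong) (use L'out Sc_def in auto)
  have b3: "nth L' ` S = P"
  proof -
    have "nth L' ` S = nth L' ` (rsl S ` {0..<k})" using rs_img by simp
    also have "\<dots> = (\<lambda>t. L' ! rsl S t) ` {0..<k}" unfolding image_image by simp
    also have "\<dots> = P" unfolding P_def by (rule image_cong) (use L'in in auto)
    finally show ?thesis .
  qed
  have b4: "nth L' ` Sc = R" unfolding R_def Sc_def[symmetric] by (rule image_cong) (use L'out Sc_def in auto)
  have sL': "seq_sign L' = sg (nth J) {0..<k} * sg (nth L) Sc * cr P R * pos S Sc"
    using sL'0 b1 b2 b3 b4 by simp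
  show ?thesis unfolding J'_def[symmetric] L'_def[symmetric] sJ sJ' sL sL' b0 by (simp add: algebra_simps)
qed

lemma cancel_sq: "(a::int) * c = b * c \<Longrightarrow> c * c = 1 \<Longrightarrow> a = b"
  by (metis mult.assoc mult.right_neutral)

lemma sign_identity_cases:
  fixes J L :: "nat list" and S :: "nat set" and k :: nat
  assumes S: "S \<subseteq> {0..<length L}" "card S = k" and kJ: "k \<le> length J"
    and dJ: "distinct J" and dL: "distinct L"
    and dJ': "distinct (Jprime J L S)" and dL': "distinct (Lprime J L S)"
    and cases: "nth L ` S = nth J ` {0..<k} \<or> nth L ` ({0..<length L} - S) = nth J ` {k..<length J}"
  shows "seq_sign (Jprime J L S) * seq_sign (Lprime J L S) = seq_sign J * seq_sign L"
proof -
  define P where "P = nth J ` {0..<k}"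
  define Q where "Q = nth J ` {k..<length J}"
  define X where "X = nth L ` S"
  define R where "R = nth L ` ({0..<length L} - S)"
  have fin: "finite P" "finite Q" "finite X" "finite R" unfolding P_def Q_def X_def R_def
    using finS[OF S kJ] by auto
  have id: "seq_sign (Jprime J L S) * seq_sign (Lprime J L S) * cr P Q * cr X R
       = seq_sign J * seq_sign L * cr X Q * cr P R"
    unfolding P_def Q_def X_def R_def by (rule sign_identity[OF S kJ dJ dL dJ' dL'])
  from cases show ?thesis
  proof
    assume "nth L ` S = nth J ` {0..<k}"
    then have XP: "X = P" unfolding X_def P_def .
    have "seq_sign (Jprime J L S) * seq_sign (Lprime J L S) * (cr P Q * cr P R)
       = seq_sign J * seq_sign L * (cr P Q * cr P R)" using id XP by (simp add: algebra_simps)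
    moreover have "(cr P Q * cr P R) * (cr P Q * cr P R) = 1"
      using cr_nonzero[OF fin(1,2)] cr_nonzero[OF fin(1,4)] by (simp add: algebra_simps)
    ultimately show ?thesis by (rule cancel_sq)
  next
    assume "nth L ` ({0..<length L} - S) = nth J ` {k..<length J}"
    then have RQ: "R = Q" unfolding R_def Q_def .
    have "seq_sign (Jprime J L S) * seq_sign (Lprime J L S) * (cr P Q * cr X Q)
       = seq_sign J * seq_sign L * (cr P Q * cr X Q)" using id RQ by (simp add: algebra_simps)
    moreover have "(cr P Q * cr X Q) * (cr P Q * cr X Q) = 1"
      using cr_nonzero[OF fin(1,2)] cr_nonzero[OF fin(3,2)] by (simp add: algebra_simps)
    ultimately show ?thesis by (rule cancel_sq)
  qed
qed

lemma okf_base: "okf T m I \<Longrightarrow> {1..<m-1} \<subseteq> I"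
proof -
  assume a: "okf T m I"
  have "{1..<m-1} \<subseteq> {1..<m}" by auto
  then show ?thesis using a unfolding okf_def by blast
qed

lemma okf_insert_big:
  assumes "z > m \<or> (z = m \<and> m \<notin> T)"
  shows "okf T m (insert z I) \<longleftrightarrow> okf T m I"
  using assms unfolding okf_def by auto

lemma card_tail:
  assumes "finite I" "I \<subseteq> {1..}" "{1..<c} \<subseteq> I"
  shows "card {a\<in>I. c \<le> a} = card I - (c - 1)"
proof -
  have U: "I = {1..<c} \<union> {a\<in>I. c \<le> a}" using assms by auto
  have D: "{1..<c} \<inter> {a\<in>I. c \<le> a} = {}" by auto
  have "card I = card {1..<c} + card {a\<in>I. c \<le> a}"
    by (subst U, rule card_Un_disjoint) (use assms D in auto)
  then show ?thesis by simp
qed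

lemma okf_big_card:
  assumes ok: "okf T m A" and fin: "finite A" and A1: "A \<subseteq> {1..}" and cA: "card A = m"
  shows "card {a\<in>A. m < a} \<le> 1" and "m \<notin> T \<Longrightarrow> card {a\<in>A. m \<le> a} \<le> 1"
proof -
  show "m \<notin> T \<Longrightarrow> card {a\<in>A. m \<le> a} \<le> 1"
  proof -
    assume mT: "m \<notin> T"
    then have "{1..<m} \<subseteq> A" using ok unfolding okf_def by auto
    then have "card {a\<in>A. m \<le> a} = card A - (m - 1)" by (rule card_tail[OF fin A1])
    then show ?thesis using cA by simp
  qed
  show "card {a\<in>A. m < a} \<le> 1"
  proof (cases "m \<in> T")
    case False
    have "{a\<in>A. m < a} \<subseteq> {a\<in>A. m \<le> a}" by auto
    then have "card {a\<in>A. m < a} \<le> card {a\<in>A. m \<le> a}" by (rule card_mono[rotated]) (use fin in auto)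
    moreover have "{1..<m} \<subseteq> A" using ok False unfolding okf_def by auto
    then have "card {a\<in>A. m \<le> a} = card A - (m - 1)" by (rule card_tail[OF fin A1])
    ultimately show ?thesis using cA by simp
  next
    case True
    then have b: "{1..<m-1} \<subseteq> A" "m - 1 \<in> A \<or> m \<in> A" using ok unfolding okf_def by auto
    obtain u where u: "u \<in> A" "u \<in> {m-1, m}" using b(2) by auto
    have u1: "u \<ge> 1" using u A1 by auto
    have sub: "insert u {1..<m-1} \<subseteq> {a\<in>A. a \<le> m}" using u b(1) by auto
    have "u \<notin> {1..<m-1}" using u by auto
    then have c1: "card (insert u {1..<m-1}) \<ge> m - 1"
    proof -
      assume "u \<notin> {1..<m-1}"
      then have "card (insert u {1..<m-1}) = Suc (card {1..<m-1})" by simp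
      then show ?thesis by simp
    qed
    have "card (insert u {1..<m-1}) \<le> card {a\<in>A. a \<le> m}" by (rule card_mono[OF _ sub]) (use fin in auto)
    then have lo: "m - 1 \<le> card {a\<in>A. a \<le> m}" using c1 by simp
    have U: "A = {a\<in>A. a \<le> m} \<union> {a\<in>A. m < a}" by auto
    have "card A = card {a\<in>A. a \<le> m} + card {a\<in>A. m < a}"
      by (subst U, rule card_Un_disjoint) (use fin in auto)
    then show ?thesis using lo cA by simp
  qed
qed

definition wsum :: "nat \<Rightarrow> nat set \<Rightarrow> nat set \<Rightarrow> nat \<Rightarrow> nat" where
  "wsum n A0 V z = wt n (insert z A0) + wt n (V - {z})"

lemma wsum_eq:
  assumes fin: "finite A0" "finite V" and z: "z \<in> V" "z \<notin> A0"
    and cA: "card A0 = e - 1" "e \<ge> 1" and cV: "card V = d + 1"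
  shows "wsum n A0 V z + (if d \<le> z \<and> z \<le> n - 1 then 1 else 0)
       = card {a\<in>A0. e \<le> a \<and> a \<le> n - 1} + card {a\<in>V. d \<le> a \<and> a \<le> n - 1} + (if e \<le> z \<and> z \<le> n - 1 then 1 else 0)"
proof -
  have c1: "card (insert z A0) = e" using cA z fin by simp
  have c2: "card (V - {z}) = d" using cV z fin by simp
  define F1 where "F1 = {a\<in>A0. e \<le> a \<and> a \<le> n - 1}"
  define F2 where "F2 = {a\<in>V - {z}. d \<le> a \<and> a \<le> n - 1}"
  have fF: "finite F1" "finite F2" unfolding F1_def F2_def using fin by auto
  have nF: "z \<notin> F1" "z \<notin> F2" unfolding F1_def F2_def using z by auto
  have w1: "wt n (insert z A0) = card F1 + (if e \<le> z \<and> z \<le> n - 1 then 1 else 0)"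
  proof (cases "e \<le> z \<and> z \<le> n - 1")
    case True
    then have "{a \<in> insert z A0. e \<le> a \<and> a \<le> n - 1} = insert z F1" unfolding F1_def by auto
    then show ?thesis unfolding wt_def c1 using True card_insert_disjoint[OF fF(1) nF(1)] by simp
  next
    case False
    then have "{a \<in> insert z A0. e \<le> a \<and> a \<le> n - 1} = F1" unfolding F1_def by auto
    then show ?thesis unfolding wt_def c1 using False by simp
  qed
  have w2: "wt n (V - {z}) + (if d \<le> z \<and> z \<le> n - 1 then 1 else 0) = card {a\<in>V. d \<le> a \<and> a \<le> n - 1}"
  proof (cases "d \<le> z \<and> z \<le> n - 1")
    case True
    then have "{a\<in>V. d \<le> a \<and> a \<le> n - 1} = insert z F2" unfolding F2_def using z by auto
    then show ?thesis unfolding wt_def c2 F2_def[symmetric] using True card_insert_disjoint[OF fF(2) nF(2)] by simp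
  next
    case False
    then have "{a\<in>V. d \<le> a \<and> a \<le> n - 1} = F2" unfolding F2_def using z by auto
    then show ?thesis unfolding wt_def c2 F2_def[symmetric] using False by simp
  qed
  show ?thesis unfolding wsum_def using w1 w2 F1_def by simp
qed

lemma two_le_card: "finite X \<Longrightarrow> a \<in> X \<Longrightarrow> b \<in> X \<Longrightarrow> a \<noteq> b \<Longrightarrow> 2 \<le> card X"
proof -
  assume "finite X" "a \<in> X" "b \<in> X" "a \<noteq> b"
  then have "card {a, b} \<le> card X" by (intro card_mono) auto
  then show ?thesis using \<open>a \<noteq> b\<close> by simp
qed

lemma pick_other:
  assumes "finite W" "card W = 3" "a \<in> W" 
  shows "\<exists>z. z \<in> W \<and> z \<noteq> a \<and> z \<noteq> b"
proof -
  have "card (W - {a, b}) \<ge> card W - card {a, b}" by (rule diff_card_le_card_Diff) simp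
  moreover have "card {a, b} \<le> 2" by (simp add: card_insert_le_m1)
  ultimately have "card (W - {a, b}) \<ge> 1" using assms by simp
  then have "W - {a, b} \<noteq> {}" by (metis card.empty not_one_le_zero)
  then show ?thesis by auto
qed

lemma abstract_lemma:
  fixes n e d :: nat and T A0 V :: "nat set" and z0 :: nat
  assumes Tn: "\<forall>a\<in>T. a + 1 \<notin> T"
  and ed: "1 \<le> e" "e \<le> d" "d \<le> n - 1"
  and A0: "A0 \<subseteq> {1..n}" "card A0 = e - 1"
  and V: "V \<subseteq> {1..n}" "card V = d + 1"
  and z0: "z0 \<in> V" "z0 \<notin> A0"
  and g0: "okf T e (insert z0 A0)" "okf T d (V - {z0})"
  and min0: "\<forall>z\<in>V-A0. wsum n A0 V z0 \<le> wsum n A0 V z"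
  shows "\<exists>z1. z1 \<in> V \<and> z1 \<notin> A0 \<and> z1 \<noteq> z0 \<and> okf T e (insert z1 A0) \<and> okf T d (V - {z1})
             \<and> wsum n A0 V z1 \<le> wsum n A0 V z0"
proof -
  have finA: "finite A0" using A0(1) finite_subset by blast
  have finV: "finite V" using V(1) finite_subset by blast
  have A1: "A0 \<subseteq> {1..}" using A0(1) by auto
  have V1: "V \<subseteq> {1..}" using V(1) by auto
  define c where "c = card {a\<in>A0. e \<le> a \<and> a \<le> n - 1} + card {a\<in>V. d \<le> a \<and> a \<le> n - 1}"
  have Wc: "\<And>z. z \<in> V \<Longrightarrow> z \<notin> A0 \<Longrightarrow> d \<le> z \<or> e = d \<Longrightarrow> wsum n A0 V z = c"
  proof -
    fix z assume z: "z \<in> V" "z \<notin> A0" "d \<le> z \<or> e = d"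
    have "z \<le> n" using z V by auto
    then show "wsum n A0 V z = c" using wsum_eq[OF finA finV z(1,2) A0(2) ed(1) V(2)] z(3) ed c_def by auto
  qed
  have Wc1: "\<And>z. z \<in> V \<Longrightarrow> z \<notin> A0 \<Longrightarrow> e \<le> z \<Longrightarrow> z < d \<Longrightarrow> wsum n A0 V z = c + 1"
  proof -
    fix z assume z: "z \<in> V" "z \<notin> A0" "e \<le> z" "z < d"
    then show "wsum n A0 V z = c + 1" using wsum_eq[OF finA finV z(1,2) A0(2) ed(1) V(2)] ed c_def by auto
  qed
  have cA: "card (insert z0 A0) = e" using A0 z0 finA ed by simp
  have finA': "finite (insert z0 A0)" using finA by simp
  have A1': "insert z0 A0 \<subseteq> {1..}" using A1 z0 V1 by auto
  have vb: "{1..<d-1} \<subseteq> V - {z0}" using okf_base[OF g0(2)] .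
  have z0b: "z0 \<ge> d - 1"
  proof (rule ccontr)
    assume "\<not> z0 \<ge> d - 1"
    then have "z0 \<in> {1..<d-1}" using z0 V1 by auto
    then show False using vb by auto
  qed
  show ?thesis
  proof (cases "d \<in> T")
    case False
    have vd: "{1..<d} \<subseteq> V - {z0}" using g0(2) False unfolding okf_def by auto
    have z0d: "z0 \<ge> d"
    proof (rule ccontr)
      assume "\<not> z0 \<ge> d"
      then have "z0 \<in> {1..<d}" using z0 V1 by auto
      then show False using vd by auto
    qed
    have vd': "{1..<d} \<subseteq> V" using vd by auto
    have cW: "card {a\<in>V. d \<le> a} = 2" using card_tail[OF finV V1 vd'] V(2) ed by simp
    have z0W: "z0 \<in> {a\<in>V. d \<le> a}" using z0 z0d by auto
    have "card ({a\<in>V. d \<le> a} - {z0}) = 1" using cW z0W finV by simp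
    then obtain z1 where z1: "{a\<in>V. d \<le> a} - {z0} = {z1}" by (rule card_1_singletonE)
    have z1p: "z1 \<in> V" "d \<le> z1" "z1 \<noteq> z0" using z1 by auto
    have z1A: "z1 \<notin> A0"
    proof
      assume z1A: "z1 \<in> A0"
      show False
      proof (cases "e \<in> T")
        case False
        have "card {a\<in>insert z0 A0. e \<le> a} \<le> 1" by (rule okf_big_card(2)[OF g0(1) finA' A1' cA False])
        moreover have "2 \<le> card {a\<in>insert z0 A0. e \<le> a}"
          by (rule two_le_card[of _ z0 z1]) (use finA z1A z1p z0d ed in auto)
        ultimately show False by simp
      next
        case True
        then have "e \<noteq> d" using \<open>d \<notin> T\<close> by auto
        then have "e < d" using ed by simp
        have "card {a\<in>insert z0 A0. e < a} \<le> 1" by (rule okf_big_card(1)[OF g0(1) finA' A1' cA])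
        moreover have "2 \<le> card {a\<in>insert z0 A0. e < a}"
          by (rule two_le_card[of _ z0 z1]) (use finA z1A z1p z0d \<open>e < d\<close> in auto)
        ultimately show False by simp
      qed
    qed
    have bigg: "\<And>z. z \<ge> d \<Longrightarrow> z > e \<or> (z = e \<and> e \<notin> T)"
    proof -
      fix z assume zd: "z \<ge> d"
      show "z > e \<or> (z = e \<and> e \<notin> T)"
      proof (cases "z = e")
        case True
        then have "e = d" using zd ed by simp
        then show ?thesis using True False by simp
      next
        case f: False
        then show ?thesis using zd ed by simp
      qed
    qed
    have big0: "z0 > e \<or> (z0 = e \<and> e \<notin> T)" using bigg z0d .
    have big1: "z1 > e \<or> (z1 = e \<and> e \<notin> T)" using bigg z1p(2) .
    have okA: "okf T e (insert z1 A0)"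
      using g0(1) okf_insert_big[OF big0] okf_insert_big[OF big1] by simp
    have okV: "okf T d (V - {z1})"
    proof -
      have "{1..<d} \<subseteq> V - {z1}" using vd' z1p by auto
      then show ?thesis using False unfolding okf_def by simp
    qed
    have "wsum n A0 V z1 = c" using Wc z1p z1A by auto
    moreover have "wsum n A0 V z0 = c" using Wc z0 z0d by auto
    ultimately show ?thesis using z1p z1A okA okV by auto
  next
    case True
    have d2: "d \<ge> 2"
    proof (rule ccontr)
      assume "\<not> d \<ge> 2"
      then have d1: "d = 1" "e = 1" using ed by auto
      then have "A0 = {}" using A0 finA by simp
      moreover have "1 \<in> insert z0 A0"
      proof -
        have "0 \<in> insert z0 A0 \<or> 1 \<in> insert z0 A0" using g0(1) d1 True unfolding okf_def by auto
        moreover have "0 \<notin> insert z0 A0" using A1' by auto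
        ultimately show ?thesis by blast
      qed
      ultimately have "z0 = 1" by simp
      moreover have "1 \<in> V - {z0}"
      proof -
        have "0 \<in> V - {z0} \<or> 1 \<in> V - {z0}" using g0(2) d1 True unfolding okf_def by auto
        moreover have "0 \<notin> V" using V1 by auto
        ultimately show ?thesis by blast
      qed
      ultimately show False by simp
    qed
    have vd': "{1..<d-1} \<subseteq> V" using vb by auto
    define W where "W = {a\<in>V. d - 1 \<le> a}"
    have finW: "finite W" unfolding W_def using finV by simp
    have cW: "card W = 3" unfolding W_def using card_tail[OF finV V1 vd'] V(2) d2 by simp
    have z0W: "z0 \<in> W" unfolding W_def using z0 z0b by auto
    obtain u0 where u0: "u0 \<in> V" "u0 \<noteq> z0" "u0 = d - 1 \<or> u0 = d"
      using g0(2) True unfolding okf_def by auto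
    show ?thesis
    proof (cases "e < d")
      case True
      have z0ne: "z0 \<noteq> d - 1"
      proof
        assume z0e: "z0 = d - 1"
        then have dV: "d \<in> V" using u0 by auto
        have dA: "d \<in> A0"
        proof (rule ccontr)
          assume "d \<notin> A0"
          then have "wsum n A0 V d = c" using Wc dV by auto
          moreover have "wsum n A0 V z0 = c + 1" using Wc1 z0 z0e True by auto
          moreover have "wsum n A0 V z0 \<le> wsum n A0 V d" using min0 dV \<open>d \<notin> A0\<close> by auto
          ultimately show False by simp
        qed
        show False
        proof (cases "e = d - 1")
          case True
          have "e \<notin> T"
          proof
            assume "e \<in> T"
            then have "e + 1 \<notin> T" using Tn by blast
            moreover have "e + 1 = d" using True d2 by simp
            ultimately show False using \<open>d \<in> T\<close> by simp
          qed
          have "card {a\<in>insert z0 A0. e \<le> a} \<le> 1" by (rule okf_big_card(2)[OF g0(1) finA' A1' cA \<open>e \<notin> T\<close>])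
          moreover have "2 \<le> card {a\<in>insert z0 A0. e \<le> a}"
            by (rule two_le_card[of _ z0 d]) (use finA dA z0e True d2 in auto)
          ultimately show False by simp
        next
          case False
          then have "e < d - 1" using \<open>e < d\<close> by simp
          have "card {a\<in>insert z0 A0. e < a} \<le> 1" by (rule okf_big_card(1)[OF g0(1) finA' A1' cA])
          moreover have "2 \<le> card {a\<in>insert z0 A0. e < a}"
            by (rule two_le_card[of _ z0 d]) (use finA dA z0e \<open>e < d - 1\<close> d2 in auto)
          ultimately show False by simp
        qed
      qed
      have z0d: "z0 \<ge> d" using z0b z0ne by simp
      have A0e: "\<And>a. a \<in> A0 \<Longrightarrow> a \<le> e"
      proof (rule ccontr)
        fix a assume a: "a \<in> A0" "\<not> a \<le> e"
        have "card {a\<in>insert z0 A0. e < a} \<le> 1" by (rule okf_big_card(1)[OF g0(1) finA' A1' cA])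
        moreover have "2 \<le> card {a\<in>insert z0 A0. e < a}"
          by (rule two_le_card[of _ z0 a]) (use finA a z0 z0d \<open>e < d\<close> in auto)
        ultimately show False by simp
      qed
      define u where "u = (if d - 1 \<in> V - {z0} then d - 1 else d)"
      have u: "u \<in> V - {z0}" "u = d - 1 \<or> u = d" using u0 unfolding u_def by auto
      have uW: "u \<in> W" using u unfolding W_def by auto
      obtain z1 where z1: "z1 \<in> W" "z1 \<noteq> z0" "z1 \<noteq> u" using pick_other[OF finW cW z0W] by blast
      have z1d: "z1 \<ge> d"
      proof -
        have "z1 \<ge> d - 1" using z1 unfolding W_def by auto
        moreover have "z1 \<noteq> d - 1"
        proof
          assume "z1 = d - 1"
          then have "d - 1 \<in> V - {z0}" using z1 unfolding W_def by auto
          then have "u = d - 1" unfolding u_def by simp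
          then show False using z1 \<open>z1 = d - 1\<close> by simp
        qed
        ultimately show ?thesis by simp
      qed
      have z1V: "z1 \<in> V" using z1 unfolding W_def by auto
      have z1A: "z1 \<notin> A0" using A0e z1d \<open>e < d\<close> by fastforce
      have big0: "z0 > e \<or> (z0 = e \<and> e \<notin> T)" using z0d \<open>e < d\<close> by auto
      have big1: "z1 > e \<or> (z1 = e \<and> e \<notin> T)" using z1d \<open>e < d\<close> by auto
      have okA: "okf T e (insert z1 A0)"
        using g0(1) okf_insert_big[OF big0] okf_insert_big[OF big1] by simp
      have okV: "okf T d (V - {z1})"
      proof -
        have "{1..<d-1} \<subseteq> V - {z1}" using vd' z1d by auto
        moreover have "u \<in> V - {z1}" using u z1 by auto
        ultimately show ?thesis using \<open>d \<in> T\<close> u unfolding okf_def by auto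
      qed
      have "wsum n A0 V z1 = c" using Wc z1V z1A z1d by auto
      moreover have "wsum n A0 V z0 = c" using Wc z0 z0d by auto
      ultimately show ?thesis using z1V z1A z1 okA okV by auto
    next
      case False
      then have ed': "e = d" using ed by simp
      have Ab: "{1..<d-1} \<subseteq> A0"
      proof -
        have "{1..<d-1} \<subseteq> insert z0 A0" using okf_base[OF g0(1)] ed' by simp
        moreover have "z0 \<notin> {1..<d-1}" using z0b by auto
        ultimately show ?thesis by auto
      qed
      have "card {x\<in>A0. d - 1 \<le> x} = 1" using card_tail[OF finA A1 Ab] A0(2) ed' d2 by simp
      then obtain a where a: "{x\<in>A0. d - 1 \<le> x} = {a}" by (rule card_1_singletonE)
      have Amem: "\<And>x. x \<in> A0 \<longleftrightarrow> x \<in> {1..<d-1} \<or> x = a"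
      proof -
        fix x
        show "x \<in> A0 \<longleftrightarrow> x \<in> {1..<d-1} \<or> x = a"
        proof
          assume "x \<in> A0"
          then show "x \<in> {1..<d-1} \<or> x = a" using a A1 by (cases "d - 1 \<le> x") auto
        next
          assume "x \<in> {1..<d-1} \<or> x = a"
          then show "x \<in> A0" using a Ab by auto
        qed
      qed
      have ad: "a \<ge> d - 1" using a by auto
      have allw: "\<And>z. z \<in> V \<Longrightarrow> z \<notin> A0 \<Longrightarrow> wsum n A0 V z = c" using Wc ed' by auto
      show ?thesis
      proof (cases "a = d - 1 \<or> a = d")
        case True
        define u where "u = (if a \<in> V then a else u0)"
        have azo: "a \<noteq> z0" using Amem[of a] z0 by auto
        have u: "u \<in> V - {z0}" "u = d - 1 \<or> u = d" using u0 True azo unfolding u_def by auto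
        have uW: "u \<in> W" using u unfolding W_def by auto
        obtain z1 where z1: "z1 \<in> W" "z1 \<noteq> z0" "z1 \<noteq> u" using pick_other[OF finW cW z0W] by blast
        have z1V: "z1 \<in> V" "z1 \<ge> d - 1" using z1 unfolding W_def by auto
        have z1a: "z1 \<noteq> a" using z1 z1V unfolding u_def by auto
        have z1A: "z1 \<notin> A0" using Amem[of z1] z1V z1a by auto
        have okA: "okf T e (insert z1 A0)"
        proof -
          have "a \<in> A0" using Amem[of a] by auto
          then show ?thesis using Ab True \<open>d \<in> T\<close> ed' unfolding okf_def by auto
        qed
        have okV: "okf T d (V - {z1})"
        proof -
          have "{1..<d-1} \<subseteq> V - {z1}" using vd' z1V by auto
          moreover have "u \<in> V - {z1}" using u z1 by auto
          ultimately show ?thesis using \<open>d \<in> T\<close> u unfolding okf_def by auto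
        qed
        show ?thesis using allw[OF z1V(1) z1A] allw[OF z0] z1V z1A z1 okA okV by auto
      next
        case False
        have z0dd: "z0 = d - 1 \<or> z0 = d"
        proof -
          have "d - 1 \<in> insert z0 A0 \<or> d \<in> insert z0 A0" using g0(1) \<open>d \<in> T\<close> ed' unfolding okf_def by auto
          moreover have "d - 1 \<notin> A0" using Amem[of "d-1"] False by simp
          moreover have "d \<notin> A0" using Amem[of d] False by auto
          ultimately show ?thesis by auto
        qed
        have u0A: "u0 \<notin> A0" using Amem[of u0] u0(3) False by auto
        have okA: "okf T e (insert u0 A0)" using Ab u0 \<open>d \<in> T\<close> ed' unfolding okf_def by auto
        have okV: "okf T d (V - {u0})"
        proof -
          have "{1..<d-1} \<subseteq> V - {u0}" using vd' u0 by auto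
          moreover have "z0 \<in> V - {u0}" using z0 u0 by auto
          ultimately show ?thesis using \<open>d \<in> T\<close> z0dd unfolding okf_def by auto
        qed
        show ?thesis using allw[OF u0(1) u0A] allw[OF z0] u0 u0A okA okV by auto
      qed
    qed
  qed
qed

definition PP :: "nat list \<Rightarrow> nat \<Rightarrow> nat set" where "PP J k = nth J ` {0..<k}"
definition QQ :: "nat list \<Rightarrow> nat \<Rightarrow> nat set" where "QQ J k = nth J ` {k..<length J}"
definition SS :: "nat list \<Rightarrow> nat \<Rightarrow> nat set set" where "SS L k = {S. S \<subseteq> {0..<length L} \<and> card S = k}"
definition nz :: "nat list \<Rightarrow> nat list \<Rightarrow> nat set \<Rightarrow> bool" where
  "nz J L S \<longleftrightarrow> distinct (Jprime J L S) \<and> distinct (Lprime J L S)"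

lemma finite_SS: "finite (SS L k)"
  unfolding SS_def by (rule finite_subset[of _ "Pow {0..<length L}"]) auto

lemma pprod_nz: "pprod xs ys m \<noteq> 0 \<longleftrightarrow> distinct xs \<and> distinct ys \<and> m = {#set xs, set ys#}"
  unfolding pprod_def seq_sign_def by auto

lemma pprod_val: "pprod xs ys m = (if distinct xs \<and> distinct ys \<and> m = {#set xs, set ys#} then seq_sign xs * seq_sign ys else 0)"
  unfolding pprod_def by simp

lemma sum_single:
  assumes "finite A" "a \<in> A" "\<And>x. x \<in> A \<Longrightarrow> x \<noteq> a \<Longrightarrow> f x = 0"
  shows "sum f A = (f a :: int)"
proof -
  have "sum f A = f a + sum f (A - {a})" using assms by (simp add: sum.remove)
  moreover have "sum f (A - {a}) = 0" using assms by (intro sum.neutral) auto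
  ultimately show ?thesis by simp
qed

lemma plucker_eq: "plucker J L k m = pprod J L m - (\<Sum>S\<in>SS L k. pprod (Jprime J L S) (Lprime J L S) m)"
  unfolding plucker_def SS_def by simp

context
  fixes J L :: "nat list" and k :: nat
  assumes dJ: "distinct J" and dL: "distinct L" and kJ: "k \<le> length J" and JL: "length J \<le> length L"
begin

lemma PQ: "PP J k \<inter> QQ J k = {}" "PP J k \<union> QQ J k = set J" "card (PP J k) = k" "card (QQ J k) = length J - k"
proof -
  have inj: "inj_on (nth J) {0..<length J}" using dJ by (auto simp: inj_on_def nth_eq_iff_index_eq)
  have U: "{0..<length J} = {0..<k} \<union> {k..<length J}" using kJ by auto
  show "PP J k \<inter> QQ J k = {}"
  proof (rule ccontr)
    assume "PP J k \<inter> QQ J k \<noteq> {}"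
    then obtain i j where ij: "i < k" "k \<le> j" "j < length J" "J ! i = J ! j" unfolding PP_def QQ_def by auto
    then have "i = j" using nth_eq_iff_index_eq[OF dJ, of i j] kJ by simp
    then show False using ij by simp
  qed
  show "PP J k \<union> QQ J k = set J" unfolding PP_def QQ_def using U set_nth_image[of J] by (simp add: image_Un)
  have i1: "inj_on (nth J) {0..<k}" using inj kJ by (auto simp: inj_on_def)
  have i2: "inj_on (nth J) {k..<length J}" using inj by (auto simp: inj_on_def)
  show "card (PP J k) = k" unfolding PP_def using card_image[OF i1] by simp
  show "card (QQ J k) = length J - k" unfolding QQ_def using card_image[OF i2] by simp
qed

lemma LS_props:
  assumes S: "S \<in> SS L k"
  shows "card (nth L ` S) = k" "nth L ` S \<subseteq> set L" "nth L ` ({0..<length L} - S) = set L - nth L ` S"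
proof -
  have Ss: "S \<subseteq> {0..<length L}" "card S = k" using S unfolding SS_def by auto
  have inj: "inj_on (nth L) {0..<length L}" using dL by (auto simp: inj_on_def nth_eq_iff_index_eq)
  have iS: "inj_on (nth L) S" using inj Ss by (auto simp: inj_on_def)
  show "card (nth L ` S) = k" using card_image[OF iS] Ss by simp
  show "nth L ` S \<subseteq> set L" using Ss by auto
  show "nth L ` ({0..<length L} - S) = set L - nth L ` S"
  proof -
    have "nth L ` ({0..<length L} - S) = nth L ` {0..<length L} - nth L ` S"
      by (rule inj_on_image_set_diff[OF inj]) (use Ss in auto)
    then show ?thesis using set_nth_image[of L] by simp
  qed
qed

lemma term_sets:
  assumes S: "S \<in> SS L k"
  shows "set (Jprime J L S) = nth L ` S \<union> QQ J k"
    and "set (Lprime J L S) = PP J k \<union> (set L - nth L ` S)"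
proof -
  have Ss: "S \<subseteq> {0..<length L}" "card S = k" using S unfolding SS_def by auto
  show "set (Jprime J L S) = nth L ` S \<union> QQ J k" using Jp_set[OF Ss kJ] unfolding QQ_def .
  show "set (Lprime J L S) = PP J k \<union> (set L - nth L ` S)" using Lp_set[OF Ss kJ] LS_props(3)[OF S] unfolding PP_def by simp
qed

lemma card_un_eq: "finite A \<Longrightarrow> finite B \<Longrightarrow> card (A \<union> B) = card A + card B \<longleftrightarrow> A \<inter> B = {}"
  using card_Un_Int[of A B] by (auto simp: card_eq_0_iff)

lemma nz_iff:
  assumes S: "S \<in> SS L k"
  shows "nz J L S \<longleftrightarrow> nth L ` S \<inter> QQ J k = {} \<and> PP J k \<inter> set L \<subseteq> nth L ` S"
proof -
  have Ss: "S \<subseteq> {0..<length L}" "card S = k" using S unfolding SS_def by auto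
  have lJ: "length (Jprime J L S) = length J" using Jp_length[OF Ss kJ] .
  have lL: "length (Lprime J L S) = length L" using Lp_length[OF Ss kJ] .
  have d1: "distinct (Jprime J L S) \<longleftrightarrow> nth L ` S \<inter> QQ J k = {}"
  proof -
    have "distinct (Jprime J L S) \<longleftrightarrow> card (set (Jprime J L S)) = length J"
      using lJ card_distinct distinct_card by metis
    also have "\<dots> \<longleftrightarrow> card (nth L ` S \<union> QQ J k) = card (nth L ` S) + card (QQ J k)"
      using term_sets(1)[OF S] LS_props(1)[OF S] PQ(4) kJ by simp
    also have "\<dots> \<longleftrightarrow> nth L ` S \<inter> QQ J k = {}"
      by (rule card_un_eq) (use Ss finite_subset in \<open>auto simp: QQ_def\<close>)
    finally show ?thesis .
  qed
  have d2: "distinct (Lprime J L S) \<longleftrightarrow> PP J k \<inter> set L \<subseteq> nth L ` S"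
  proof -
    have fS: "finite (nth L ` S)" using Ss finite_subset by (metis finite_atLeastLessThan finite_imageI)
    have cL: "card (set L - nth L ` S) = length L - k"
      using card_Diff_subset[OF fS LS_props(2)[OF S]] LS_props(1)[OF S] distinct_card[OF dL] by simp
    have "distinct (Lprime J L S) \<longleftrightarrow> card (set (Lprime J L S)) = length L"
      using lL card_distinct distinct_card by metis
    also have "\<dots> \<longleftrightarrow> card (PP J k \<union> (set L - nth L ` S)) = card (PP J k) + card (set L - nth L ` S)"
      using term_sets(2)[OF S] cL PQ(3) kJ JL by simp
    also have "\<dots> \<longleftrightarrow> PP J k \<inter> (set L - nth L ` S) = {}" by (rule card_un_eq) (auto simp: PP_def)
    also have "\<dots> \<longleftrightarrow> PP J k \<inter> set L \<subseteq> nth L ` S" by auto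
    finally show ?thesis .
  qed
  show ?thesis unfolding nz_def using d1 d2 by simp
qed

lemma S_of_W:
  assumes W: "W \<subseteq> set L" "card W = k"
  defines "S \<equiv> {i\<in>{0..<length L}. L ! i \<in> W}"
  shows "S \<in> SS L k" "nth L ` S = W"
proof -
  show img: "nth L ` S = W"
  proof
    show "nth L ` S \<subseteq> W" unfolding S_def by auto
    show "W \<subseteq> nth L ` S"
    proof
      fix w assume "w \<in> W"
      then have "w \<in> set L" using W by auto
      then obtain i where "i < length L" "L ! i = w" by (auto simp: in_set_conv_nth)
      then show "w \<in> nth L ` S" unfolding S_def using \<open>w \<in> W\<close> by auto
    qed
  qed
  have inj: "inj_on (nth L) S" unfolding S_def using dL by (auto simp: inj_on_def nth_eq_iff_index_eq)
  have "card S = k" using card_image[OF inj] img W by simp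
  then show "S \<in> SS L k" unfolding SS_def S_def by auto
qed

lemma S_unique:
  assumes "S \<in> SS L k" "S' \<in> SS L k" "nth L ` S = nth L ` S'"
  shows "S = S'"
proof -
  have inj: "inj_on (nth L) {0..<length L}" using dL by (auto simp: inj_on_def nth_eq_iff_index_eq)
  show ?thesis using inj_on_image_eq_iff[OF inj] assms unfolding SS_def by auto
qed

end

lemma mset2_eq: "({#a, b#} = {#c, d#}) \<longleftrightarrow> (a = c \<and> b = d) \<or> (a = d \<and> b = c)"
  by (auto simp: add_eq_conv_ex)

context
  fixes J L :: "nat list" and k :: nat
  assumes dJ: "distinct J" and dL: "distinct L" and kJ: "k \<le> length J" and JL: "length J \<le> length L"
begin

lemma zero_case:
  assumes S0: "S0 \<in> SS L k" and nz0: "nz J L S0"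
    and only: "\<And>S. S \<in> SS L k \<Longrightarrow> nz J L S \<Longrightarrow> S = S0"
    and mon: "{#set (Jprime J L S0), set (Lprime J L S0)#} = {#set J, set L#}"
    and sgn: "seq_sign (Jprime J L S0) * seq_sign (Lprime J L S0) = seq_sign J * seq_sign L"
  shows "plucker J L k m = 0"
proof -
  have "(\<Sum>S\<in>SS L k. pprod (Jprime J L S) (Lprime J L S) m) = pprod (Jprime J L S0) (Lprime J L S0) m"
  proof (rule sum_single[OF finite_SS S0])
    fix S assume "S \<in> SS L k" "S \<noteq> S0"
    then have "\<not> nz J L S" using only by blast
    then show "pprod (Jprime J L S) (Lprime J L S) m = 0" unfolding nz_def pprod_def by auto
  qed
  moreover have "pprod (Jprime J L S0) (Lprime J L S0) m = pprod J L m"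
    using nz0 mon sgn dJ dL unfolding nz_def pprod_val by simp
  ultimately show ?thesis unfolding plucker_eq by simp
qed

lemma h0_zero:
  assumes P: "PP J k \<subseteq> set L"
  shows "plucker J L k m = 0"
proof -
  define S0 where "S0 = {i\<in>{0..<length L}. L ! i \<in> PP J k}"
  have S0: "S0 \<in> SS L k" "nth L ` S0 = PP J k"
    using S_of_W[OF dJ dL kJ JL P PQ(3)[OF dJ dL kJ JL]] unfolding S0_def by auto
  have PQd: "PP J k \<inter> QQ J k = {}" using PQ(1)[OF dJ dL kJ JL] .
  have nz0: "nz J L S0" using nz_iff[OF dJ dL kJ JL S0(1)] S0(2) PQd by auto
  have only: "\<And>S. S \<in> SS L k \<Longrightarrow> nz J L S \<Longrightarrow> S = S0"
  proof -
    fix S assume S: "S \<in> SS L k" "nz J L S"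
    have sub: "PP J k \<subseteq> nth L ` S" using nz_iff[OF dJ dL kJ JL S(1)] S(2) P by auto
    have "card (nth L ` S) = k" using LS_props(1)[OF dJ dL kJ JL S(1)] .
    moreover have "finite (nth L ` S)" using S(1) unfolding SS_def by (auto intro: finite_subset)
    ultimately have "PP J k = nth L ` S" using card_subset_eq[OF _ sub] PQ(3)[OF dJ dL kJ JL] by simp
    then show "S = S0" using S_unique[OF dJ dL kJ JL S(1) S0(1)] S0(2) by simp
  qed
  have sets: "set (Jprime J L S0) = set J" "set (Lprime J L S0) = set L"
    using term_sets[OF dJ dL kJ JL S0(1)] S0(2) PQ(2)[OF dJ dL kJ JL] P by auto
  have sgn: "seq_sign (Jprime J L S0) * seq_sign (Lprime J L S0) = seq_sign J * seq_sign L"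
    using S0 nz0 dJ dL kJ unfolding SS_def nz_def PP_def
    by (intro sign_identity_cases) auto
  show ?thesis by (rule zero_case[OF S0(1) nz0 only]) (use sets sgn in auto)
qed

lemma eqQ_zero:
  assumes ed: "length J = length L" and Q: "QQ J k \<subseteq> set L"
  shows "plucker J L k m = 0"
proof -
  define W where "W = set L - QQ J k"
  have cW: "card W = k"
  proof -
    have fQ: "finite (QQ J k)" unfolding QQ_def by simp
    have "card W = card (set L) - card (QQ J k)" unfolding W_def by (rule card_Diff_subset[OF fQ Q])
    then show ?thesis using distinct_card[OF dL] PQ(4)[OF dJ dL kJ JL] ed kJ by simp
  qed
  have Ws: "W \<subseteq> set L" unfolding W_def by auto
  define S0 where "S0 = {i\<in>{0..<length L}. L ! i \<in> W}"
  have S0: "S0 \<in> SS L k" "nth L ` S0 = W"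
    using S_of_W[OF dJ dL kJ JL Ws cW] unfolding S0_def by auto
  have PQd: "PP J k \<inter> QQ J k = {}" using PQ(1)[OF dJ dL kJ JL] .
  have nz0: "nz J L S0" using nz_iff[OF dJ dL kJ JL S0(1)] S0(2) PQd unfolding W_def by auto
  have only: "\<And>S. S \<in> SS L k \<Longrightarrow> nz J L S \<Longrightarrow> S = S0"
  proof -
    fix S assume S: "S \<in> SS L k" "nz J L S"
    have sub: "nth L ` S \<subseteq> W" using nz_iff[OF dJ dL kJ JL S(1)] S(2) LS_props(2)[OF dJ dL kJ JL S(1)] unfolding W_def by auto
    have "card (nth L ` S) = k" using LS_props(1)[OF dJ dL kJ JL S(1)] .
    moreover have "finite W" unfolding W_def by simp
    ultimately have "nth L ` S = W" using card_subset_eq[OF _ sub] cW by simp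
    then show "S = S0" using S_unique[OF dJ dL kJ JL S(1) S0(1)] S0(2) by simp
  qed
  have sets: "set (Jprime J L S0) = set L" "set (Lprime J L S0) = set J"
    using term_sets[OF dJ dL kJ JL S0(1)] S0(2) PQ(2)[OF dJ dL kJ JL] Q unfolding W_def by auto
  have Sc: "nth L ` ({0..<length L} - S0) = nth J ` {k..<length J}"
    using LS_props(3)[OF dJ dL kJ JL S0(1)] S0(2) Q unfolding W_def QQ_def by auto
  have sgn: "seq_sign (Jprime J L S0) * seq_sign (Lprime J L S0) = seq_sign J * seq_sign L"
    using S0 nz0 dJ dL kJ Sc unfolding SS_def nz_def
    by (intro sign_identity_cases) auto
  show ?thesis by (rule zero_case[OF S0(1) nz0 only]) (use sets sgn in \<open>auto simp: mset2_eq\<close>)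
qed

end

context
  fixes J L :: "nat list" and k :: nat and y :: nat
  assumes dJ: "distinct J" and dL: "distinct L" and kJ: "k \<le> length J" and JL: "length J \<le> length L"
    and y: "PP J k - set L = {y}"
    and notX: "\<not> (length J = length L \<and> QQ J k \<subseteq> set L)"
begin

lemma F0: "y \<in> PP J k" "y \<notin> set L" "y \<in> set J" "y \<notin> QQ J k"
  "PP J k \<inter> set L = PP J k - {y}" "card (PP J k \<inter> set L) = k - 1"
  "set J - {y} = (PP J k \<inter> set L) \<union> QQ J k"
proof -
  show y1: "y \<in> PP J k" "y \<notin> set L" using y by auto
  show y2: "y \<in> set J" using y1 PQ(2)[OF dJ dL kJ JL] by auto
  show y3: "y \<notin> QQ J k" using y1 PQ(1)[OF dJ dL kJ JL] by auto
  show e1: "PP J k \<inter> set L = PP J k - {y}" using y by auto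
  have "finite (PP J k)" unfolding PP_def by simp
  then show "card (PP J k \<inter> set L) = k - 1" using e1 y1 PQ(3)[OF dJ dL kJ JL] by simp
  show "set J - {y} = (PP J k \<inter> set L) \<union> QQ J k" using e1 y3 PQ(2)[OF dJ dL kJ JL] by auto
qed

lemma F1:
  assumes S: "S \<in> SS L k" and nzS: "nz J L S"
  shows "\<exists>z. z \<in> set L \<and> z \<notin> set J \<and> nth L ` S = insert z (PP J k \<inter> set L)
    \<and> set (Jprime J L S) = insert z (set J - {y}) \<and> set (Lprime J L S) = insert y (set L) - {z}"
proof -
  have c: "nth L ` S \<inter> QQ J k = {}" "PP J k \<inter> set L \<subseteq> nth L ` S" using nz_iff[OF dJ dL kJ JL S] nzS by auto
  have cS: "card (nth L ` S) = k" using LS_props(1)[OF dJ dL kJ JL S] .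
  have fS: "finite (nth L ` S)" using S unfolding SS_def by (auto intro: finite_subset)
  have k1: "k \<ge> 1" using F0(1) PQ(3)[OF dJ dL kJ JL] unfolding PP_def by (cases k) auto
  have "card (nth L ` S - (PP J k \<inter> set L)) = 1"
    using card_Diff_subset[OF _ c(2)] F0(6) cS k1 fS by (simp add: finite_subset)
  then obtain z where z: "nth L ` S - (PP J k \<inter> set L) = {z}" by (rule card_1_singletonE)
  have LSz: "nth L ` S = insert z (PP J k \<inter> set L)" using z c(2) by auto
  have zL: "z \<in> set L" using LS_props(2)[OF dJ dL kJ JL S] LSz by auto
  have zP: "z \<notin> PP J k" using z zL by auto
  have zQ: "z \<notin> QQ J k" using c(1) LSz by auto
  have zJ: "z \<notin> set J" using zP zQ PQ(2)[OF dJ dL kJ JL] by auto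
  have s1: "set (Jprime J L S) = insert z (set J - {y})"
    using term_sets(1)[OF dJ dL kJ JL S] LSz F0(7) by auto
  have s2: "set (Lprime J L S) = insert y (set L) - {z}"
  proof -
    have "set (Lprime J L S) = PP J k \<union> (set L - nth L ` S)" using term_sets(2)[OF dJ dL kJ JL S] .
    also have "\<dots> = insert y (set L) - {z}"
    proof
      show "PP J k \<union> (set L - nth L ` S) \<subseteq> insert y (set L) - {z}"
        using LSz zP y by auto
      show "insert y (set L) - {z} \<subseteq> PP J k \<union> (set L - nth L ` S)"
        using LSz F0(1) by auto
    qed
    finally show ?thesis .
  qed
  show ?thesis using zL zJ LSz s1 s2 by blast
qed

lemma F2:
  assumes z: "z \<in> set L" "z \<notin> set J"
  shows "\<exists>S\<in>SS L k. nz J L S \<and> nth L ` S = insert z (PP J k \<inter> set L)"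
proof -
  define W where "W = insert z (PP J k \<inter> set L)"
  have Ws: "W \<subseteq> set L" unfolding W_def using z by auto
  have zP: "z \<notin> PP J k \<inter> set L" using z PQ(2)[OF dJ dL kJ JL] by auto
  have k1: "k \<ge> 1" using F0(1) PQ(3)[OF dJ dL kJ JL] unfolding PP_def by (cases k) auto
  have fP: "finite (PP J k \<inter> set L)" unfolding PP_def by simp
  have cW: "card W = k" unfolding W_def using card_insert_disjoint[OF fP zP] F0(6) k1 by simp
  define S where "S = {i\<in>{0..<length L}. L ! i \<in> W}"
  have S: "S \<in> SS L k" "nth L ` S = W" using S_of_W[OF dJ dL kJ JL Ws cW] unfolding S_def by auto
  have "nz J L S" using nz_iff[OF dJ dL kJ JL S(1)] S(2) z PQ(1)[OF dJ dL kJ JL] PQ(2)[OF dJ dL kJ JL]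
    unfolding W_def by auto
  then show ?thesis using S W_def by blast
qed

lemma Inj:
  assumes z: "z \<in> insert y (set L)" "z \<notin> set J - {y}" and z': "z' \<in> insert y (set L)" "z' \<notin> set J - {y}"
    and eq: "{#insert z (set J - {y}), insert y (set L) - {z}#} = {#insert z' (set J - {y}), insert y (set L) - {z'}#}"
  shows "z = z'"
proof (rule ccontr)
  assume ne: "z \<noteq> z'"
  from eq have "(insert z (set J - {y}) = insert z' (set J - {y}) \<and> insert y (set L) - {z} = insert y (set L) - {z'})
     \<or> (insert z (set J - {y}) = insert y (set L) - {z'} \<and> insert y (set L) - {z} = insert z' (set J - {y}))"
    by (simp add: mset2_eq)
  then show False
  proof
    assume a: "insert z (set J - {y}) = insert z' (set J - {y}) \<and> insert y (set L) - {z} = insert y (set L) - {z'}"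
    then have "z \<in> insert z' (set J - {y})" by blast
    then show False using ne z by auto
  next
    assume a: "insert z (set J - {y}) = insert y (set L) - {z'} \<and> insert y (set L) - {z} = insert z' (set J - {y})"
    have lJ: "length J \<ge> 1" using F0(3) by (cases J) auto
    have c1: "card (insert z (set J - {y})) = length J"
      using z(2) F0(3) distinct_card[OF dJ] lJ by (simp add: card_Diff_singleton)
    have c2: "card (insert y (set L) - {z'}) = length L"
      using z'(1) F0(2) distinct_card[OF dL] by (simp add: card_Diff_singleton)
    have ed: "length J = length L" using a c1 c2 by simp
    have "QQ J k \<subseteq> set L"
    proof
      fix q assume q: "q \<in> QQ J k"
      then have "q \<in> set J - {y}" using F0(4) PQ(2)[OF dJ dL kJ JL] by auto
      then have "q \<in> insert y (set L) - {z'}" using a by blast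
      then show "q \<in> set L" using q F0(4) by auto
    qed
    then show False using notX ed by simp
  qed
qed


lemma mJL: "{#set J, set L#} = {#insert y (set J - {y}), insert y (set L) - {y}#}"
proof -
  have "insert y (set J - {y}) = set J" using F0(3) by auto
  moreover have "insert y (set L) - {y} = set L" using F0(2) by auto
  ultimately show ?thesis by simp
qed

lemma term_mon:
  assumes S: "S \<in> SS L k" and nzp: "pprod (Jprime J L S) (Lprime J L S) m \<noteq> 0"
  shows "\<exists>z'. z' \<in> set L \<and> z' \<notin> set J \<and> nth L ` S = insert z' (PP J k \<inter> set L)
     \<and> m = {#insert z' (set J - {y}), insert y (set L) - {z'}#}"
proof -
  have nzS: "nz J L S" and m: "m = {#set (Jprime J L S), set (Lprime J L S)#}" using nzp unfolding pprod_nz nz_def by auto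
  obtain z' where z': "z' \<in> set L" "z' \<notin> set J" "nth L ` S = insert z' (PP J k \<inter> set L)"
     "set (Jprime J L S) = insert z' (set J - {y})" "set (Lprime J L S) = insert y (set L) - {z'}"
    using F1[OF S nzS] by blast
  show ?thesis using z' m by auto
qed

lemma Val:
  assumes z: "z \<in> insert y (set L)" "z \<notin> set J - {y}"
  shows "plucker J L k {#insert z (set J - {y}), insert y (set L) - {z}#} \<noteq> 0"
proof (cases "z = y")
  case True
  have "(\<Sum>S\<in>SS L k. pprod (Jprime J L S) (Lprime J L S) {#insert z (set J - {y}), insert y (set L) - {z}#}) = 0"
  proof (rule sum.neutral, rule ballI, rule ccontr)
    fix S assume S: "S \<in> SS L k" and ne: "pprod (Jprime J L S) (Lprime J L S) {#insert z (set J - {y}), insert y (set L) - {z}#} \<noteq> 0"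
    obtain z' where z': "z' \<in> set L" "z' \<notin> set J"
      "{#insert z (set J - {y}), insert y (set L) - {z}#} = {#insert z' (set J - {y}), insert y (set L) - {z'}#}"
      using term_mon[OF S ne] by blast
    have "z = z'" by (rule Inj[OF z _ _ z'(3)]) (use z' in auto)
    then show False using True z' F0(2) by simp
  qed
  moreover have "pprod J L {#insert z (set J - {y}), insert y (set L) - {z}#} \<noteq> 0"
    using mJL True dJ dL unfolding pprod_nz by simp
  ultimately show ?thesis unfolding plucker_eq by simp
next
  case False
  have zL: "z \<in> set L" "z \<notin> set J" using z False by auto
  define m where "m = {#insert z (set J - {y}), insert y (set L) - {z}#}"
  have p0: "pprod J L m = 0"
  proof (rule ccontr)
    assume "pprod J L m \<noteq> 0"
    then have "m = {#set J, set L#}" unfolding pprod_nz by simp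
    then have eqm: "{#insert z (set J - {y}), insert y (set L) - {z}#} = {#insert y (set J - {y}), insert y (set L) - {y}#}"
      unfolding m_def mJL .
    have "z = y" by (rule Inj[OF z _ _ eqm]) (use F0 in auto)
    then show False using False by simp
  qed
  obtain Sz where Sz: "Sz \<in> SS L k" "nz J L Sz" "nth L ` Sz = insert z (PP J k \<inter> set L)"
    using F2[OF zL] by blast
  have sm: "(\<Sum>S\<in>SS L k. pprod (Jprime J L S) (Lprime J L S) m) = pprod (Jprime J L Sz) (Lprime J L Sz) m"
  proof (rule sum_single[OF finite_SS Sz(1)], rule ccontr)
    fix S assume S: "S \<in> SS L k" "S \<noteq> Sz" and ne: "pprod (Jprime J L S) (Lprime J L S) m \<noteq> 0"
    obtain z' where z': "z' \<in> set L" "z' \<notin> set J" "nth L ` S = insert z' (PP J k \<inter> set L)"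
      "m = {#insert z' (set J - {y}), insert y (set L) - {z'}#}"
      using term_mon[OF S(1) ne] by blast
    have "z = z'" by (rule Inj[OF z _ _ ]) (use z' m_def in auto)
    then have "nth L ` S = nth L ` Sz" using z'(3) Sz(3) by simp
    then show False using S_unique[OF dJ dL kJ JL S(1) Sz(1)] S(2) by simp
  qed
  have pz: "pprod (Jprime J L Sz) (Lprime J L Sz) m \<noteq> 0"
  proof -
    obtain z'' where z'': "z'' \<in> set L" "z'' \<notin> set J" "nth L ` Sz = insert z'' (PP J k \<inter> set L)"
      "set (Jprime J L Sz) = insert z'' (set J - {y})" "set (Lprime J L Sz) = insert y (set L) - {z''}"
      using F1[OF Sz(1,2)] by blast
    have "z'' = z"
    proof -
      have "z'' \<in> insert z (PP J k \<inter> set L)" using z''(3) Sz(3) by auto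
      moreover have "z'' \<notin> PP J k" using z''(2) PQ(2)[OF dJ dL kJ JL] by auto
      ultimately show ?thesis by auto
    qed
    then show ?thesis using Sz(2) z'' unfolding pprod_nz nz_def m_def by simp
  qed
  show ?thesis unfolding plucker_eq m_def[symmetric] using p0 sm pz by simp
qed

lemma Cover:
  assumes "plucker J L k m \<noteq> 0"
  shows "\<exists>z. z \<in> insert y (set L) \<and> z \<notin> set J - {y} \<and> m = {#insert z (set J - {y}), insert y (set L) - {z}#}"
proof (cases "pprod J L m = 0")
  case True
  then have "(\<Sum>S\<in>SS L k. pprod (Jprime J L S) (Lprime J L S) m) \<noteq> 0" using assms unfolding plucker_eq by simp
  then obtain S where S: "S \<in> SS L k" "pprod (Jprime J L S) (Lprime J L S) m \<noteq> 0"
    using sum.not_neutral_contains_not_neutral by blast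
  obtain z' where z': "z' \<in> set L" "z' \<notin> set J" "m = {#insert z' (set J - {y}), insert y (set L) - {z'}#}"
    using term_mon[OF S] by blast
  then show ?thesis by blast
next
  case False
  then have "m = {#set J, set L#}" unfolding pprod_nz by simp
  then show ?thesis using mJL F0 by blast
qed

end

lemma mweight2: "mweight n {#A, B#} = wt n A + wt n B"
  unfolding mweight_def by simp

lemma main_false:
  fixes n :: nat and ks J L :: "nat list" and k :: nat
  assumes n2: "n \<ge> 2" and ksd: "distinct ks" and ksr: "set ks \<subseteq> {1..n-1}" and ksa: "\<forall>a\<in>set ks. a + 1 \<notin> set ks"
    and dJ: "distinct J" and dL: "distinct L" and sJ: "set J \<subseteq> {1..n}" and sL: "set L \<subseteq> {1..n}"
    and e1: "1 \<le> length J" and JL: "length J \<le> length L" and Ln: "length L \<le> n - 1"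
    and k1: "1 \<le> k" and kJ: "k \<le> length J"
    and deg: "degenerates n (coxc n \<circ> sprod ks) J L k"
  shows False
proof -
  define v where "v = coxc n \<circ> sprod ks"
  define T where "T = set ks"
  define R where "R = plucker J L k"
  define e where "e = length J"
  define d where "d = length L"
  define okv where "okv I \<longleftrightarrow> subset_le I (v ` {1..card I})" for I
  have Kf: "\<And>m. kill v (init_w n R) m \<noteq> 0 \<longleftrightarrow> (\<forall>I\<in>#m. okv I) \<and> R m \<noteq> 0 \<and> (\<forall>m'. R m' \<noteq> 0 \<longrightarrow> mweight n m \<le> mweight n m')"
    unfolding kill_def init_w_def okv_def by auto
  obtain m0 where m0: "kill v (init_w n R) m0 \<noteq> 0" and uniq: "\<And>m. kill v (init_w n R) m \<noteq> 0 \<Longrightarrow> m = m0"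
    using deg unfolding degenerates_def v_def R_def by auto
  have okc: "\<And>I. I \<subseteq> {1..n} \<Longrightarrow> 1 \<le> card I \<Longrightarrow> card I \<le> n - 1 \<Longrightarrow> okv I \<longleftrightarrow> okf T (card I) I"
    unfolding okv_def v_def T_def using ok_iff[OF n2 ksd ksr ksa] by blast
  have R0: "R m0 \<noteq> 0" and ok0: "\<forall>I\<in>#m0. okv I" and min: "\<forall>m'. R m' \<noteq> 0 \<longrightarrow> mweight n m0 \<le> mweight n m'"
    using m0 Kf by auto
  have PQd: "PP J k \<inter> QQ J k = {}" "PP J k \<union> QQ J k = set J" using PQ(1,2)[OF dJ dL kJ JL] by auto
  obtain A B where AB: "m0 = {#A, B#}" "card A = e" "card B = d" "A \<inter> B = set J \<inter> set L"
    "A \<subseteq> {1..n}" "B \<subseteq> {1..n}"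
  proof (cases "pprod J L m0 = 0")
    case False
    then have "m0 = {#set J, set L#}" unfolding pprod_nz by simp
    then show ?thesis using that distinct_card[OF dJ] distinct_card[OF dL] sJ sL e_def d_def by blast
  next
    case True
    then have "(\<Sum>S\<in>SS L k. pprod (Jprime J L S) (Lprime J L S) m0) \<noteq> 0" using R0 unfolding R_def plucker_eq by simp
    then obtain S where S: "S \<in> SS L k" "pprod (Jprime J L S) (Lprime J L S) m0 \<noteq> 0"
      using sum.not_neutral_contains_not_neutral by blast
    have nzS: "nz J L S" and m: "m0 = {#set (Jprime J L S), set (Lprime J L S)#}" using S(2) unfolding pprod_nz nz_def by auto
    have Ss: "S \<subseteq> {0..<length L}" "card S = k" using S(1) unfolding SS_def by auto
    have c1: "card (set (Jprime J L S)) = e" using distinct_card nzS Jp_length[OF Ss kJ] unfolding nz_def e_def by metis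
    have c2: "card (set (Lprime J L S)) = d" using distinct_card nzS Lp_length[OF Ss kJ] unfolding nz_def d_def by metis
    have cond: "nth L ` S \<inter> QQ J k = {}" "PP J k \<inter> set L \<subseteq> nth L ` S" using nz_iff[OF dJ dL kJ JL S(1)] nzS by auto
    have LS: "nth L ` S \<subseteq> set L" using LS_props(2)[OF dJ dL kJ JL S(1)] .
    have ts: "set (Jprime J L S) = nth L ` S \<union> QQ J k" "set (Lprime J L S) = PP J k \<union> (set L - nth L ` S)"
      using term_sets[OF dJ dL kJ JL S(1)] by auto
    have int: "set (Jprime J L S) \<inter> set (Lprime J L S) = set J \<inter> set L"
      unfolding ts using cond LS PQd by blast
    have s1: "set (Jprime J L S) \<subseteq> {1..n}" unfolding ts using LS sL sJ PQd by blast
    have s2: "set (Lprime J L S) \<subseteq> {1..n}" unfolding ts using sL sJ PQd by blast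
    show ?thesis using that m c1 c2 int s1 s2 by blast
  qed
  have ed: "e \<le> d" "d \<le> n - 1" "1 \<le> e" using JL Ln e1 unfolding e_def d_def by auto
  have okA: "okf T e A" using ok0 AB okc[of A] ed by auto
  have okB: "okf T d B" using ok0 AB okc[of B] ed by auto
  have Cb: "{1..<e-1} \<subseteq> set J \<inter> set L"
  proof -
    have "{1..<e-1} \<subseteq> A" using okf_base[OF okA] .
    moreover have "{1..<e-1} \<subseteq> {1..<d-1}" using ed by auto
    then have "{1..<e-1} \<subseteq> B" using okf_base[OF okB] by blast
    ultimately show ?thesis using AB(4) by blast
  qed
  have cC: "card (set J \<inter> set L) \<ge> e - 2"
  proof -
    have "card {1..<e-1} \<le> card (set J \<inter> set L)" by (rule card_mono[OF _ Cb]) simp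
    then show ?thesis by simp
  qed
  have cJL: "card (set J - set L) = e - card (set J \<inter> set L)"
    using card_Diff_subset_Int[of "set J" "set L"] distinct_card[OF dJ] unfolding e_def by simp
  have cJL2: "card (set J - set L) \<le> 2" using cJL cC by simp
  show False
  proof (cases "PP J k \<subseteq> set L")
    case True
    then show False using h0_zero[OF dJ dL kJ JL True] R0 unfolding R_def by simp
  next
    case notP: False
    show False
    proof (cases "e = d \<and> QQ J k \<subseteq> set L")
      case True
      then show False using eqQ_zero[OF dJ dL kJ JL] R0 unfolding R_def e_def d_def by simp
    next
      case notX: False
      have fPL: "finite (PP J k - set L)" unfolding PP_def by simp
      have hpos: "card (PP J k - set L) \<ge> 1" using notP fPL by (simp add: Suc_le_eq card_gt_0_iff)
      have PLJL: "PP J k - set L \<subseteq> set J - set L" using PQd by blast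
      have hle: "card (PP J k - set L) \<le> card (set J - set L)" by (rule card_mono[OF _ PLJL]) simp
      show False
      proof (cases "card (PP J k - set L) = 1")
        case False
        then have h2: "card (PP J k - set L) = 2" using hpos hle cJL2 by simp
        then have cJL': "card (set J - set L) = 2" using hle cJL2 by simp
        have eqPL: "PP J k - set L = set J - set L"
          using card_subset_eq[OF _ PLJL] h2 cJL' by simp
        have QL: "QQ J k \<subseteq> set L"
        proof
          fix q assume q: "q \<in> QQ J k"
          show "q \<in> set L"
          proof (rule ccontr)
            assume "q \<notin> set L"
            then have "q \<in> set J - set L" using q PQd by blast
            then have "q \<in> PP J k" using eqPL by blast
            then show False using q PQd by blast
          qed
        qed
        then have edl: "e < d" using notX ed by auto
        have e2: "e \<ge> 2" using cJL' card_mono[of "set J" "set J - set L"] distinct_card[OF dJ] unfolding e_def by fastforce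
        have cC2: "card (set J \<inter> set L) = e - 2" using cJL cJL' by simp
        have Ceq: "set J \<inter> set L = {1..<e-1}"
          using card_subset_eq[OF _ Cb] cC2 e2 by simp
        have B1: "{1..<d-1} \<subseteq> B" using okf_base[OF okB] .
        have noe1: "e - 1 \<notin> A"
        proof
          assume "e - 1 \<in> A"
          moreover have "e - 1 \<in> {1..<d-1}" using e2 edl by auto
          then have "e - 1 \<in> B" using B1 by blast
          ultimately have "e - 1 \<in> set J \<inter> set L" using AB(4) by blast
          then show False using Ceq by auto
        qed
        have eA: "e \<in> T" "e \<in> A"
        proof -
          have "e - 1 \<in> {1..<e}" using e2 by auto
          then have "e - 1 \<in> A \<or> (e \<in> T \<and> e \<in> A)" using okA unfolding okf_def by blast
          then show "e \<in> T" "e \<in> A" using noe1 by auto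
        qed
        have "e \<in> B"
        proof (cases "e < d - 1")
          case True
          then have "e \<in> {1..<d-1}" using e2 by auto
          then show ?thesis using B1 by blast
        next
          case False
          then have de: "d = e + 1" using edl by simp
          then have "d \<notin> T" using ksa eA(1) unfolding T_def by auto
          then have "{1..<d} \<subseteq> B" using okB unfolding okf_def by auto
          moreover have "e \<in> {1..<d}" using de e2 by auto
          ultimately show ?thesis by blast
        qed
        then have "e \<in> set J \<inter> set L" using eA(2) AB(4) by blast
        then show False using Ceq by auto
      next
        case True
        then obtain y where y: "PP J k - set L = {y}" by (rule card_1_singletonE)
        have notX': "\<not> (length J = length L \<and> QQ J k \<subseteq> set L)" using notX unfolding e_def d_def .
        note F0s = F0[OF dJ dL kJ JL y notX']
        define A0 where "A0 = set J - {y}"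
        define V where "V = insert y (set L)"
        have cA0: "card A0 = e - 1" unfolding A0_def e_def using F0s(3) distinct_card[OF dJ] by (simp add: card_Diff_singleton)
        have cV: "card V = d + 1" unfolding V_def d_def using F0s(2) distinct_card[OF dL] by simp
        have sA0: "A0 \<subseteq> {1..n}" unfolding A0_def using sJ by auto
        have sV: "V \<subseteq> {1..n}" unfolding V_def using sL sJ F0s(3) by auto
        have finA0: "finite A0" unfolding A0_def by simp
        have finV: "finite V" unfolding V_def by simp
        obtain z0 where z0: "z0 \<in> V" "z0 \<notin> A0" "m0 = {#insert z0 A0, V - {z0}#}"
          using Cover[OF dJ dL kJ JL y notX'] R0 unfolding R_def A0_def V_def by blast
        have ci: "\<And>z. z \<notin> A0 \<Longrightarrow> card (insert z A0) = e" using cA0 finA0 ed by simp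
        have cd: "\<And>z. z \<in> V \<Longrightarrow> card (V - {z}) = d" using cV finV by simp
        have g0: "okf T e (insert z0 A0)" "okf T d (V - {z0})"
        proof -
          have "okv (insert z0 A0)" "okv (V - {z0})" using ok0 z0(3) by auto
          moreover have "insert z0 A0 \<subseteq> {1..n}" "V - {z0} \<subseteq> {1..n}" using sA0 sV z0 by auto
          ultimately show "okf T e (insert z0 A0)" "okf T d (V - {z0})"
            using okc[of "insert z0 A0"] okc[of "V - {z0}"] ci[OF z0(2)] cd[OF z0(1)] ed by auto
        qed
        have mw: "\<And>z. mweight n {#insert z A0, V - {z}#} = wsum n A0 V z"
          unfolding mweight2 wsum_def by simp
        have Rz: "\<And>z. z \<in> V \<Longrightarrow> z \<notin> A0 \<Longrightarrow> R {#insert z A0, V - {z}#} \<noteq> 0"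
          unfolding R_def A0_def V_def using Val[OF dJ dL kJ JL y notX'] by blast
        have min0: "\<forall>z\<in>V-A0. wsum n A0 V z0 \<le> wsum n A0 V z"
        proof
          fix z assume "z \<in> V - A0"
          then have "R {#insert z A0, V - {z}#} \<noteq> 0" using Rz by blast
          then have "mweight n m0 \<le> mweight n {#insert z A0, V - {z}#}" using min by blast
          then show "wsum n A0 V z0 \<le> wsum n A0 V z" using mw z0(3) by metis
        qed
        have Tn: "\<forall>a\<in>T. a + 1 \<notin> T" using ksa unfolding T_def .
        obtain z1 where z1: "z1 \<in> V" "z1 \<notin> A0" "z1 \<noteq> z0" "okf T e (insert z1 A0)" "okf T d (V - {z1})"
          "wsum n A0 V z1 \<le> wsum n A0 V z0"
          using abstract_lemma[OF Tn ed(3) ed(1) ed(2) sA0 cA0 sV cV z0(1) z0(2) g0 min0] by blast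
        define m1 where "m1 = {#insert z1 A0, V - {z1}#}"
        have "kill v (init_w n R) m1 \<noteq> 0"
        proof -
          have "okv (insert z1 A0)" "okv (V - {z1})"
          proof -
            have "insert z1 A0 \<subseteq> {1..n}" "V - {z1} \<subseteq> {1..n}" using sA0 sV z1 by auto
            then show "okv (insert z1 A0)" "okv (V - {z1})"
              using okc[of "insert z1 A0"] okc[of "V - {z1}"] ci[OF z1(2)] cd[OF z1(1)] ed z1(4,5) by auto
          qed
          then have "\<forall>I\<in>#m1. okv I" unfolding m1_def by auto
          moreover have "R m1 \<noteq> 0" unfolding m1_def using Rz z1 by blast
          moreover have "\<forall>m'. R m' \<noteq> 0 \<longrightarrow> mweight n m1 \<le> mweight n m'"
            using min z1(6) mw z0(3) unfolding m1_def by (metis order_trans)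
          ultimately show ?thesis using Kf by blast
        qed
        then have "m1 = m0" by (rule uniq)
        then have "z1 = z0"
          using Inj[OF dJ dL kJ JL y notX', of z1 z0] z1 z0 unfolding m1_def A0_def V_def by blast
        then show False using z1(3) by simp
      qed
    qed
  qed
qed

theorem proposition4p10:
  fixes n :: nat and ks :: "nat list"
  assumes "n \<ge> 2"
    and "set ks \<subseteq> {1..n-1}"
    and "\<forall>i < length ks. \<forall>j < length ks. i \<noteq> j \<longrightarrow>
           ks ! i + 1 < ks ! j \<or> ks ! j + 1 < ks ! i"
  shows "\<forall>J L k. distinct J \<and> distinct L \<and> set J \<subseteq> {1..n} \<and> set L \<subseteq> {1..n}
           \<and> 1 \<le> length J \<and> length J \<le> length L \<and> length L \<le> n - 1
           \<and> 1 \<le> k \<and> k \<le> length J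
           \<longrightarrow> \<not> degenerates n (coxc n \<circ> sprod ks) J L k"
proof (intro allI impI notI)
  fix J L :: "nat list" and k :: nat
  assume c: "distinct J \<and> distinct L \<and> set J \<subseteq> {1..n} \<and> set L \<subseteq> {1..n}
           \<and> 1 \<le> length J \<and> length J \<le> length L \<and> length L \<le> n - 1
           \<and> 1 \<le> k \<and> k \<le> length J"
    and deg: "degenerates n (coxc n \<circ> sprod ks) J L k"
  have ksd: "distinct ks"
    unfolding distinct_conv_nth
  proof (intro allI impI)
    fix i j assume "i < length ks" "j < length ks" "i \<noteq> j"
    then have "ks ! i + 1 < ks ! j \<or> ks ! j + 1 < ks ! i" using assms(3) by blast
    then show "ks ! i \<noteq> ks ! j" by auto
  qed
  have ksa: "\<forall>a\<in>set ks. a + 1 \<notin> set ks"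
  proof (intro ballI notI)
    fix a assume a: "a \<in> set ks" "a + 1 \<in> set ks"
    obtain i where i: "i < length ks" "ks ! i = a" using a(1) by (auto simp: in_set_conv_nth)
    obtain j where j: "j < length ks" "ks ! j = a + 1" using a(2) by (auto simp: in_set_conv_nth)
    have "i \<noteq> j" using i j by auto
    then have "ks ! i + 1 < ks ! j \<or> ks ! j + 1 < ks ! i" using assms(3) i j by blast
    then show False using i j by auto
  qed
  show False
    using main_false[OF assms(1) ksd assms(2) ksa, of J L k] c deg by blast
qed

end
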